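(* Let $\mathcal{I}$ be an $\mathcal{R}$-monoid, let $\mathcal{S} \subseteq \mathcal{P}(\mathbb{N})$ be closed under subsets, and let $\mathcal{L}$ be a class of languages. The following are equivalent: (1) there is a learner $h\in\mathcal I$ that $\mathbf{Txt}\mathbf{G}\mathbf{Caut}_{\mathbf{Tar}}\mathbf{Ex}$-learns every $L\in\mathcal L$ and that is defined on every text $T\in\mathbf{Txt}(\mathcal S)$ (i.e. $\mathbf G(h,T)$ is total); (2) there is a learner $h\in\mathcal I$ that $\mathbf{Txt}\mathbf{Psd}\mathbf{Caut}_{\mathbf{Tar}}\mathbf{Ex}$-learns every $L\in\mathcal L$ and that is defined on every text $T\in\mathbf{Txt}(\mathcal S)$ (i.e. $\mathbf{Psd}(h,T)$ is total).
   Context: Fix an acceptable numbering $(\varphi_e)$ of partial computable functions, $W_e=\mathrm{dom}(\varphi_e)$. A text is a total function $T:\mathbb N\to\mathbb N\cup\{\#\}$, $\mathrm{content}(T)=\mathrm{range}(T)\setminus\{\#\}$, $T[n]=(T(0),\dots,T(n-1))$; $\mathbf{Txt}(L)$ is the set of texts with content $L$, and for $\mathcal S$ closed under subsets $\mathbf{Txt}(\mathcal S)=\bigcup_{S\in\mathcal S}\mathbf{Txt}(S)$. Learners are partial computable functions; $\mathbf G(h,T)(i)=h(T[i])$ and $\mathbf{Psd}(h,T)(i)=h(\mathrm{content}(T[i]),i)$. For total $p:\mathbb N\to\mathbb N$ and a text $T$: $\mathbf{Ex}(p,T)$ iff $\exists n_0\,\forall n\ge n_0: p(n)=p(n_0)\wedge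 W_{p(n_0)}=\mathrm{content}(T)$; $\mathbf{Caut}_{\mathbf{Tar}}(p,T)$ iff for no $n$ is $\mathrm{content}(T)\subsetneq W_{p(n)}$. $h$ $\mathbf{Txt}\beta\delta\mathbf{Ex}$-learns $L$ iff for every $T\in\mathbf{Txt}(L)$, $\beta(h,T)$ is total and $\delta(\beta(h,T),T)$ and $\mathbf{Ex}(\beta(h,T),T)$ hold. $\mathcal R$ is the set of total computable functions; $\mathcal I\subseteq$ (partial computable functions) is an $\mathcal R$-monoid iff $(\mathcal I,\circ)$ is a monoid and $\mathcal R\subseteq\mathcal I$. *)

theory Defs
  imports Main "HOL-Library.Nat_Bijection"
begin

text \<open>A function of arity n is represented as a map on lists of naturals; only
its values on lists of length n are meaningful.\<close>

fun prim_rec_op :: "(nat list \<Rightarrow> nat option) \<Rightarrow> (nat list \<Rightarrow> nat option) \<Rightarrow> nat list \<Rightarrow> nat option" where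
  "prim_rec_op g h [] = None"
| "prim_rec_op g h (k # ys) =
     rec_nat (g ys) (\<lambda>i acc. Option.bind acc (\<lambda>a. h (i # a # ys))) k"

definition mu_op :: "(nat list \<Rightarrow> nat option) \<Rightarrow> nat list \<Rightarrow> nat option" where
  "mu_op f xs =
     (if \<exists>y. f (y # xs) = Some 0 \<and> (\<forall>z<y. f (z # xs) \<noteq> None)
      then Some (LEAST y. f (y # xs) = Some 0 \<and> (\<forall>z<y. f (z # xs) \<noteq> None))
      else None)"

definition comp_op :: "(nat list \<Rightarrow> nat option) \<Rightarrow> (nat list \<Rightarrow> nat option) list \<Rightarrow> nat list \<Rightarrow> nat option" where
  "comp_op g fs xs =
     (if \<forall>f\<in>set fs. f xs \<noteq> None then g (map (\<lambda>f. the (f xs)) fs) else None)"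

inductive partrec :: "nat \<Rightarrow> (nat list \<Rightarrow> nat option) \<Rightarrow> bool" where
  zero: "partrec n (\<lambda>xs. Some 0)"
| succ: "partrec 1 (\<lambda>xs. Some (Suc (hd xs)))"
| proj: "i < n \<Longrightarrow> partrec n (\<lambda>xs. Some (xs ! i))"
| comp: "partrec m g \<Longrightarrow> length fs = m \<Longrightarrow> (\<forall>f\<in>set fs. partrec n f)
          \<Longrightarrow> partrec n (comp_op g fs)"
| prec: "partrec n g \<Longrightarrow> partrec (Suc (Suc n)) h \<Longrightarrow> partrec (Suc n) (prim_rec_op g h)"
| mu: "partrec (Suc n) f \<Longrightarrow> partrec n (mu_op f)"

definition pcomp :: "(nat \<Rightarrow> nat option) \<Rightarrow> bool" where
  "pcomp F \<longleftrightarrow> (\<exists>f. partrec 1 f \<and> (\<forall>x. F x = f [x]))"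

definition pcomp2 :: "(nat \<Rightarrow> nat \<Rightarrow> nat option) \<Rightarrow> bool" where
  "pcomp2 F \<longleftrightarrow> (\<exists>f. partrec 2 f \<and> (\<forall>e x. F e x = f [e, x]))"

definition total_fn :: "(nat \<Rightarrow> nat option) \<Rightarrow> bool" where
  "total_fn F \<longleftrightarrow> (\<forall>x. F x \<noteq> None)"

definition Rfun :: "(nat \<Rightarrow> nat option) set" where
  "Rfun = {F. pcomp F \<and> total_fn F}"

definition acceptable :: "(nat \<Rightarrow> nat \<Rightarrow> nat option) \<Rightarrow> bool" where
  "acceptable \<phi> \<longleftrightarrow> pcomp2 \<phi> \<and>
     (\<forall>\<psi>. pcomp2 \<psi> \<longrightarrow> (\<exists>t\<in>Rfun. \<forall>e. \<phi> (the (t e)) = \<psi> e))"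

definition W :: "(nat \<Rightarrow> nat \<Rightarrow> nat option) \<Rightarrow> nat \<Rightarrow> nat set" where
  "W \<phi> e = dom (\<phi> e)"

definition R_monoid :: "(nat \<Rightarrow> nat option) set \<Rightarrow> bool" where
  "R_monoid I \<longleftrightarrow> (\<forall>f\<in>I. pcomp f) \<and> Some \<in> I \<and>
     (\<forall>f\<in>I. \<forall>g\<in>I. f \<circ>\<^sub>m g \<in> I) \<and> Rfun \<subseteq> I"

text \<open>A text is a total function nat to nat option; None plays the role of the pause symbol.\<close>
type_synonym ntext = "nat \<Rightarrow> nat option"

definition content :: "ntext \<Rightarrow> nat set" where
  "content T = {x. \<exists>i. T i = Some x}"

definition initseg :: "ntext \<Rightarrow> nat \<Rightarrow> nat option list" where
  "initseg T n = map T [0..<n]"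

definition content_list :: "nat option list \<Rightarrow> nat set" where
  "content_list s = {x. Some x \<in> set s}"

definition seq_code :: "nat option list \<Rightarrow> nat" where
  "seq_code s = list_encode (map (\<lambda>c. case c of None \<Rightarrow> 0 | Some x \<Rightarrow> Suc x) s)"

definition set_code :: "nat set \<Rightarrow> nat" where
  "set_code D = (\<Sum>x\<in>D. 2 ^ x)"

definition Gbeta :: "(nat \<Rightarrow> nat option) \<Rightarrow> ntext \<Rightarrow> nat \<Rightarrow> nat option" where
  "Gbeta h T i = h (seq_code (initseg T i))"

definition Psd :: "(nat \<Rightarrow> nat option) \<Rightarrow> ntext \<Rightarrow> nat \<Rightarrow> nat option" where
  "Psd h T i = h (prod_encode (set_code (content_list (initseg T i)), i))"

definition Ex :: "(nat \<Rightarrow> nat \<Rightarrow> nat option) \<Rightarrow> (nat \<Rightarrow> nat) \<Rightarrow> ntext \<Rightarrow> bool" where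
  "Ex \<phi> p T \<longleftrightarrow> (\<exists>n0. \<forall>n\<ge>n0. p n = p n0 \<and> W \<phi> (p n0) = content T)"

definition CautTar :: "(nat \<Rightarrow> nat \<Rightarrow> nat option) \<Rightarrow> (nat \<Rightarrow> nat) \<Rightarrow> ntext \<Rightarrow> bool" where
  "CautTar \<phi> p T \<longleftrightarrow> (\<forall>n. \<not> (content T \<subset> W \<phi> (p n)))"

definition learns_CautEx ::
  "(nat \<Rightarrow> nat \<Rightarrow> nat option) \<Rightarrow> ((nat \<Rightarrow> nat option) \<Rightarrow> ntext \<Rightarrow> nat \<Rightarrow> nat option)
   \<Rightarrow> (nat \<Rightarrow> nat option) \<Rightarrow> nat set \<Rightarrow> bool" where
  "learns_CautEx \<phi> \<beta> h L \<longleftrightarrow>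
     (\<forall>T. content T = L \<longrightarrow>
        (\<forall>i. \<beta> h T i \<noteq> None) \<and>
        CautTar \<phi> (\<lambda>i. the (\<beta> h T i)) T \<and>
        Ex \<phi> (\<lambda>i. the (\<beta> h T i)) T)"

definition defined_on_Txt ::
  "((nat \<Rightarrow> nat option) \<Rightarrow> ntext \<Rightarrow> nat \<Rightarrow> nat option) \<Rightarrow> (nat \<Rightarrow> nat option) \<Rightarrow> nat set set \<Rightarrow> bool" where
  "defined_on_Txt \<beta> h S \<longleftrightarrow> (\<forall>T. content T \<in> S \<longrightarrow> (\<forall>i. \<beta> h T i \<noteq> None))"

end

theory Submission
  imports Defs "HOL-Library.Nat_Bijection"
begin


definition rec1 :: "nat \<Rightarrow> (nat list \<Rightarrow> nat) \<Rightarrow> bool" where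
  "rec1 n F \<longleftrightarrow> (\<exists>f. partrec n f \<and> (\<forall>xs. length xs = n \<longrightarrow> f xs = Some (F xs)))"

lemma rec1_cong:
  assumes "rec1 n F" "\<And>xs. length xs = n \<Longrightarrow> F xs = G xs"
  shows "rec1 n G"
  using assms unfolding rec1_def by metis

lemma rec1_cong':
  assumes "rec1 m F" "m = n" "\<And>xs. length xs = n \<Longrightarrow> F xs = G xs"
  shows "rec1 n G"
  using assms unfolding rec1_def by metis

lemma len1: "length xs = Suc 0 \<longleftrightarrow> (\<exists>a. xs = [a])"
  by (cases xs) auto
lemma len2: "length xs = 2 \<longleftrightarrow> (\<exists>a b. xs = [a,b])"
  by (auto simp: numeral_2_eq_2 length_Suc_conv)
lemma len3: "length xs = 3 \<longleftrightarrow> (\<exists>a b c. xs = [a,b,c])"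
  by (auto simp: numeral_3_eq_3 length_Suc_conv)

lemma rec1_zero: "rec1 n (\<lambda>xs. 0)"
  unfolding rec1_def using partrec.zero by blast

lemma rec1_proj: "i < n \<Longrightarrow> rec1 n (\<lambda>xs. xs ! i)"
  unfolding rec1_def using partrec.proj by blast

lemma rec1_succ: "rec1 1 (\<lambda>xs. Suc (xs ! 0))"
  unfolding rec1_def
  by (rule exI[of _ "\<lambda>xs. Some (Suc (hd xs))"]) (use partrec.succ in \<open>auto simp: len1\<close>)

lemma list_choice_partrec:
  assumes "\<forall>F\<in>set Fs. rec1 n F"
  shows "\<exists>fs. length fs = length Fs \<and> (\<forall>f\<in>set fs. partrec n f) \<and>
     (\<forall>xs. length xs = n \<longrightarrow> map (\<lambda>f. f xs) fs = map (\<lambda>F. Some (F xs)) Fs)"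
  using assms
proof (induction Fs)
  case Nil
  then show ?case by auto
next
  case (Cons F Fs)
  then obtain fs where fs: "length fs = length Fs" "\<forall>f\<in>set fs. partrec n f"
     "\<forall>xs. length xs = n \<longrightarrow> map (\<lambda>f. f xs) fs = map (\<lambda>F. Some (F xs)) Fs" by auto
  from Cons.prems obtain f where f: "partrec n f" "\<forall>xs. length xs = n \<longrightarrow> f xs = Some (F xs)"
    unfolding rec1_def by auto
  show ?case
    by (rule exI[of _ "f # fs"]) (use fs f in auto)
qed

lemma rec1_comp:
  assumes "rec1 m G" "length Fs = m" "\<forall>F\<in>set Fs. rec1 n F"
  shows "rec1 n (\<lambda>xs. G (map (\<lambda>F. F xs) Fs))"
proof -
  obtain fs where fs: "length fs = length Fs" "\<forall>f\<in>set fs. partrec n f"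
     "\<forall>xs. length xs = n \<longrightarrow> map (\<lambda>f. f xs) fs = map (\<lambda>F. Some (F xs)) Fs"
    using list_choice_partrec[OF assms(3)] by blast
  obtain g where g: "partrec m g" "\<forall>xs. length xs = m \<longrightarrow> g xs = Some (G xs)"
    using assms(1) unfolding rec1_def by auto
  have "partrec n (comp_op g fs)"
    using partrec.comp[OF g(1) _ fs(2)] fs(1) assms(2) by simp
  moreover have "comp_op g fs xs = Some (G (map (\<lambda>F. F xs) Fs))" if "length xs = n" for xs
  proof -
    have m: "map (\<lambda>f. f xs) fs = map (\<lambda>F. Some (F xs)) Fs" using fs(3) that by auto
    have "\<forall>f\<in>set fs. f xs \<noteq> None"
    proof
      fix f assume "f \<in> set fs"
      then have "f xs \<in> set (map (\<lambda>f. f xs) fs)" by auto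
      then show "f xs \<noteq> None" unfolding m by auto
    qed
    moreover have "map (\<lambda>f. the (f xs)) fs = map (\<lambda>F. F xs) Fs"
    proof -
      have "map (\<lambda>f. the (f xs)) fs = map the (map (\<lambda>f. f xs) fs)" by simp
      also have "\<dots> = map (\<lambda>F. F xs) Fs" unfolding m by simp
      finally show ?thesis .
    qed
    moreover have "length (map (\<lambda>F. F xs) Fs) = m" using assms(2) by simp
    ultimately show ?thesis unfolding comp_op_def using g(2) by simp
  qed
  ultimately show ?thesis unfolding rec1_def by blast
qed

lemma rec1_comp1:
  assumes "rec1 1 (\<lambda>ys. G (ys!0))" "rec1 n A"
  shows "rec1 n (\<lambda>xs. G (A xs))"
  using rec1_comp[OF assms(1), of "[A]"] assms(2) by simp

lemma rec1_comp2:
  assumes "rec1 2 (\<lambda>ys. G (ys!0) (ys!1))" "rec1 n A" "rec1 n B"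
  shows "rec1 n (\<lambda>xs. G (A xs) (B xs))"
  using rec1_comp[OF assms(1), of "[A,B]"] assms(2,3) by simp

lemma rec1_comp3:
  assumes "rec1 3 (\<lambda>ys. G (ys!0) (ys!1) (ys!2))" "rec1 n A" "rec1 n B" "rec1 n C"
  shows "rec1 n (\<lambda>xs. G (A xs) (B xs) (C xs))"
  using rec1_comp[OF assms(1), of "[A,B,C]"] assms(2,3,4) by (simp add: numeral_3_eq_3)

lemma prim_rec_op_Some:
  assumes "\<And>ys. length ys = n \<Longrightarrow> g ys = Some (G ys)"
    "\<And>zs. length zs = Suc (Suc n) \<Longrightarrow> h zs = Some (H zs)"
    "length ys = n"
  shows "prim_rec_op g h (k # ys) = Some (rec_nat (G ys) (\<lambda>i a. H (i # a # ys)) k)"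
  using assms by (induction k) auto

lemma rec1_prec:
  assumes "rec1 n G" "rec1 (Suc (Suc n)) H"
  shows "rec1 (Suc n) (\<lambda>xs. rec_nat (G (tl xs)) (\<lambda>i a. H (i # a # tl xs)) (hd xs))"
proof -
  obtain g where g: "partrec n g" "\<forall>xs. length xs = n \<longrightarrow> g xs = Some (G xs)"
    using assms(1) unfolding rec1_def by auto
  obtain h where h: "partrec (Suc (Suc n)) h" "\<forall>xs. length xs = Suc (Suc n) \<longrightarrow> h xs = Some (H xs)"
    using assms(2) unfolding rec1_def by auto
  show ?thesis unfolding rec1_def
  proof (intro exI conjI allI impI)
    show "partrec (Suc n) (prim_rec_op g h)" using partrec.prec[OF g(1) h(1)] .
  next
    fix xs :: "nat list" assume "length xs = Suc n"
    then obtain k ys where xs: "xs = k # ys" "length ys = n" by (cases xs) auto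
    show "prim_rec_op g h xs = Some (rec_nat (G (tl xs)) (\<lambda>i a. H (i # a # tl xs)) (hd xs))"
      unfolding xs using prim_rec_op_Some[of n g G h H ys k] g(2) h(2) xs(2) by simp
  qed
qed

lemma rec1_prec2:
  assumes "rec1 1 (\<lambda>ys. G (ys!0))" "rec1 3 (\<lambda>zs. H (zs!0) (zs!1) (zs!2))"
  shows "rec1 2 (\<lambda>xs. rec_nat (G (xs!1)) (\<lambda>i a. H i a (xs!1)) (xs!0))"
proof -
  have "rec1 (Suc 1) (\<lambda>xs. rec_nat ((\<lambda>ys. G (ys!0)) (tl xs)) (\<lambda>i a. (\<lambda>zs. H (zs!0) (zs!1) (zs!2)) (i # a # tl xs)) (hd xs))"
    by (rule rec1_prec) (use assms in \<open>simp_all add: numeral_3_eq_3\<close>)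
  then show ?thesis
    by (rule rec1_cong') (auto simp: len2)
qed

abbreviation "P0 \<equiv> (\<lambda>xs::nat list. xs!0)"
abbreviation "P1 \<equiv> (\<lambda>xs::nat list. xs!1)"
abbreviation "P2 \<equiv> (\<lambda>xs::nat list. xs!2)"

lemma rec1_const: "rec1 n (\<lambda>xs. c)"
proof (induction c)
  case 0 then show ?case by (rule rec1_zero)
next
  case (Suc c)
  show ?case using rec1_comp1[OF rec1_succ Suc] .
qed

lemma rec1_add: "rec1 2 (\<lambda>xs. xs!0 + xs!1)"
proof -
  have "rec1 2 (\<lambda>xs. rec_nat (xs!1) (\<lambda>i a. Suc a) (xs!0))"
    using rec1_prec2[of "\<lambda>y. y" "\<lambda>i a y. Suc a"] rec1_proj[of 0 1]
      rec1_comp1[OF rec1_succ rec1_proj[of 1 3]] by simp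
  moreover have "rec_nat y (\<lambda>i a. Suc a) k = k + y" for y k :: nat by (induction k) auto
  ultimately show ?thesis by simp
qed

lemma rec1_mult: "rec1 2 (\<lambda>xs. xs!0 * xs!1)"
proof -
  have "rec1 2 (\<lambda>xs. rec_nat 0 (\<lambda>i a. a + xs!1) (xs!0))"
    using rec1_prec2[of "\<lambda>y. 0" "\<lambda>i a y. a + y"] rec1_zero
      rec1_comp2[OF rec1_add rec1_proj[of 1 3] rec1_proj[of 2 3]] by simp
  moreover have "rec_nat 0 (\<lambda>i a. a + y) k = k * y" for y k :: nat by (induction k) auto
  ultimately show ?thesis by simp
qed

lemma rec1_pred: "rec1 1 (\<lambda>xs. xs!0 - 1)"
proof -
  have "rec1 (Suc 0) (\<lambda>xs. rec_nat ((\<lambda>ys. 0) (tl xs)) (\<lambda>i a. (\<lambda>zs. zs!0) (i # a # tl xs)) (hd xs))"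
    by (rule rec1_prec) (auto intro: rec1_zero rec1_proj)
  moreover have "rec_nat 0 (\<lambda>i a. i) k = k - 1" for k :: nat by (induction k) auto
  ultimately have "rec1 (Suc 0) (\<lambda>xs. hd xs - 1)" by simp
  then show ?thesis by (rule rec1_cong') (auto simp: len1)
qed

lemma rec1_sub: "rec1 2 (\<lambda>xs. xs!0 - xs!1)"
proof -
  have "rec1 2 (\<lambda>xs. rec_nat (xs!1) (\<lambda>i a. a - 1) (xs!0))"
    using rec1_prec2[of "\<lambda>y. y" "\<lambda>i a y. a - 1"] rec1_proj[of 0 1]
      rec1_comp1[OF rec1_pred rec1_proj[of 1 3]] by simp
  moreover have "rec_nat y (\<lambda>i a. a - 1) k = y - k" for y k :: nat by (induction k) auto
  ultimately have "rec1 2 (\<lambda>xs. xs!1 - xs!0)" by simp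
  from rec1_comp2[OF this rec1_proj[of 1 2] rec1_proj[of 0 2]] show ?thesis by simp
qed

lemma rec1_cond: "rec1 3 (\<lambda>xs. if xs!0 = 0 then xs!1 else xs!2)"
proof -
  have "rec1 (Suc 2) (\<lambda>xs. rec_nat ((\<lambda>ys. ys!0) (tl xs)) (\<lambda>i a. (\<lambda>zs. zs!3) (i # a # tl xs)) (hd xs))"
    by (rule rec1_prec) (auto intro: rec1_proj)
  then show ?thesis
    by (rule rec1_cong') (auto simp: len3 gr0_conv_Suc)
qed

lemma rec1_Suc': "rec1 n A \<Longrightarrow> rec1 n (\<lambda>xs. Suc (A xs))"
  using rec1_comp1[OF rec1_succ] .
lemma rec1_add': "rec1 n A \<Longrightarrow> rec1 n B \<Longrightarrow> rec1 n (\<lambda>xs. A xs + B xs)"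
  using rec1_comp2[OF rec1_add] .
lemma rec1_mult': "rec1 n A \<Longrightarrow> rec1 n B \<Longrightarrow> rec1 n (\<lambda>xs. A xs * B xs)"
  using rec1_comp2[OF rec1_mult] .
lemma rec1_sub': "rec1 n A \<Longrightarrow> rec1 n B \<Longrightarrow> rec1 n (\<lambda>xs. A xs - B xs)"
  using rec1_comp2[OF rec1_sub] .
lemma rec1_cond': "rec1 n A \<Longrightarrow> rec1 n B \<Longrightarrow> rec1 n C \<Longrightarrow> rec1 n (\<lambda>xs. if A xs = 0 then B xs else C xs)"
  using rec1_comp3[OF rec1_cond] .
lemma rec1_proj': "i < n \<Longrightarrow> rec1 n (\<lambda>xs. xs ! i)" by (rule rec1_proj)
lemmas rec1_intros = rec1_Suc' rec1_add' rec1_mult' rec1_sub' rec1_cond' rec1_proj' rec1_const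


lemma rec1_triangle: "rec1 1 (\<lambda>xs. triangle (xs!0))"
proof -
  have "rec1 (Suc 0) (\<lambda>xs. rec_nat ((\<lambda>ys. 0) (tl xs)) (\<lambda>i a. (\<lambda>zs. zs!1 + Suc (zs!0)) (i # a # tl xs)) (hd xs))"
    by (rule rec1_prec) (auto intro!: rec1_intros)
  moreover have "rec_nat 0 (\<lambda>i a. a + Suc i) k = triangle k" for k by (induction k) auto
  ultimately have "rec1 (Suc 0) (\<lambda>xs. triangle (hd xs))" by simp
  then show ?thesis by (rule rec1_cong') (auto simp: len1)
qed

lemma rec1_pe: "rec1 2 (\<lambda>xs. prod_encode (xs!0, xs!1))"
proof -
  have "rec1 2 (\<lambda>xs. triangle (xs!0 + xs!1) + xs!0)"
    by (rule rec1_comp2[OF rec1_add rec1_comp1[OF rec1_triangle rec1_add] rec1_proj]) simp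
  then show ?thesis by (simp add: prod_encode_def)
qed

definition bsearch :: "(nat \<Rightarrow> bool) \<Rightarrow> nat \<Rightarrow> nat" where
  "bsearch P b = rec_nat 0 (\<lambda>i a. if a < i then a else if P i then i else Suc i) b"

lemma bsearch_eq: "bsearch P b = (if \<exists>y<b. P y then LEAST y. P y else b)"
proof (induction b)
  case 0 then show ?case by (simp add: bsearch_def)
next
  case (Suc b)
  have s: "bsearch P (Suc b) = (if bsearch P b < b then bsearch P b else if P b then b else Suc b)"
    by (simp add: bsearch_def)
  show ?case
  proof (cases "\<exists>y<b. P y")
    case True
    then obtain y where "y < b" "P y" by auto
    then have "(LEAST y. P y) < b" by (meson Least_le order.strict_trans1)
    then show ?thesis using Suc True s \<open>y < b\<close> \<open>P y\<close> less_Suc_eq by auto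
  next
    case False
    then have "bsearch P b = b" using Suc.IH by (metis (full_types))
    moreover have "P b \<Longrightarrow> (LEAST y. P y) = b"
      by (rule Least_equality) (use False in \<open>auto simp: not_less[symmetric]\<close>)
    ultimately show ?thesis using s False
      by (cases "P b") (auto simp: less_Suc_eq)
  qed
qed

lemma bsearch_le: "bsearch P b \<le> b"
  by (auto simp: bsearch_eq intro: Least_le order.trans less_imp_le)

lemma bsearch_less_iff: "bsearch P b < b \<longleftrightarrow> (\<exists>y<b. P y)"
proof -
  have "\<exists>y<b. P y \<Longrightarrow> (LEAST y. P y) < b" by (meson Least_le order.strict_trans1)
  then show ?thesis by (auto simp: bsearch_eq)
qed

lemma bsearch_found: "bsearch P b < b \<Longrightarrow> P (bsearch P b)"
  by (metis bsearch_eq LeastI nat_less_le)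

lemma bsearch_min: "y < bsearch P b \<Longrightarrow> \<not> P y"
  by (metis bsearch_eq bsearch_le not_less_Least order.strict_trans2)

lemma rec1_less: "rec1 2 (\<lambda>xs. if xs!0 < xs!1 then 1 else 0)"
proof -
  have "rec1 2 (\<lambda>xs. if xs!1 - xs!0 = 0 then 0 else 1)"
    by (rule rec1_comp3[OF rec1_cond]) (auto intro!: rec1_intros)
  then show ?thesis by (rule rec1_cong) (auto)
qed

lemma rec1_bsearch:
  assumes "rec1 2 (\<lambda>xs. p (xs!0) (xs!1))"
  shows "rec1 2 (\<lambda>xs. bsearch (\<lambda>y. p y (xs!1) \<noteq> 0) (xs!0))"
proof -
  have h: "rec1 3 (\<lambda>zs. if zs!1 < zs!0 then zs!1 else if p (zs!0) (zs!2) \<noteq> 0 then zs!0 else Suc (zs!0))"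
  proof -
    have a: "rec1 3 (\<lambda>zs. if zs!1 < zs!0 then 1 else 0)"
      by (rule rec1_comp2[OF rec1_less]) (auto intro: rec1_proj)
    have b: "rec1 3 (\<lambda>zs. p (zs!0) (zs!2))"
      by (rule rec1_comp2[OF assms]) (auto intro: rec1_proj)
    have c: "rec1 3 (\<lambda>zs. if p (zs!0) (zs!2) = 0 then Suc (zs!0) else zs!0)"
      by (rule rec1_comp3[OF rec1_cond b]) (auto intro!: rec1_intros)
    have "rec1 3 (\<lambda>zs. if (if zs!1 < zs!0 then 1 else 0) = (0::nat) then (if p (zs!0) (zs!2) = 0 then Suc (zs!0) else zs!0) else zs!1)"
      by (rule rec1_comp3[OF rec1_cond a c]) (auto intro: rec1_proj)
    then show ?thesis by (rule rec1_cong) auto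
  qed
  have "rec1 2 (\<lambda>xs. rec_nat ((\<lambda>y. 0) (xs!1)) (\<lambda>i a. (\<lambda>i a x. if a < i then a else if p i x \<noteq> 0 then i else Suc i) i a (xs!1)) (xs!0))"
    by (rule rec1_prec2) (use h rec1_zero in simp_all)
  then show ?thesis unfolding bsearch_def by (simp only:)
qed


lemma ind_nz[simp]: "((if P then 1 else 0::nat) \<noteq> 0) = P" "(0 < (if P then 1 else 0::nat)) = P"
  "((if P then 1 else 0::nat) = 0) = (\<not>P)"
  by auto

definition pi1 :: "nat \<Rightarrow> nat" where "pi1 x = fst (prod_decode x)"
definition pi2 :: "nat \<Rightarrow> nat" where "pi2 x = snd (prod_decode x)"
abbreviation pe :: "nat \<Rightarrow> nat \<Rightarrow> nat" where "pe a b \<equiv> prod_encode (a, b)"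

lemma pi1_pe[simp]: "pi1 (pe a b) = a" by (simp add: pi1_def)
lemma pi2_pe[simp]: "pi2 (pe a b) = b" by (simp add: pi2_def)
lemma pe_pi[simp]: "pe (pi1 x) (pi2 x) = x" by (simp add: pi1_def pi2_def)

lemma triangle_mono: "a \<le> b \<Longrightarrow> triangle a \<le> triangle b"
  by (induction b) (auto simp: le_Suc_eq)

lemma decode_sum: "bsearch (\<lambda>s. x < triangle (Suc s)) (Suc x) = pi1 x + pi2 x"
proof -
  obtain m n where mn: "x = pe m n" by (metis pe_pi)
  have x: "x = triangle (m+n) + m" by (simp add: mn prod_encode_def)
  have P: "x < triangle (Suc (m+n))" using x by simp
  have notP: "\<not> x < triangle (Suc s)" if "s < m + n" for s
    using triangle_mono[of "Suc s" "m+n"] that x by simp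
  have "k \<le> triangle k" for k by (induction k) auto
  then have le: "m + n < Suc x" using x by (metis le_add1 le_imp_less_Suc order.trans)
  have "(LEAST s. x < triangle (Suc s)) = m + n"
    by (rule Least_equality) (use P notP in \<open>auto simp: not_less[symmetric]\<close>)
  then show ?thesis using le P by (auto simp: bsearch_eq mn)
qed

lemma pi1_formula: "pi1 x = x - triangle (bsearch (\<lambda>s. x < triangle (Suc s)) (Suc x))"
proof -
  obtain m n where mn: "x = pe m n" by (metis pe_pi)
  show ?thesis unfolding decode_sum by (simp only: mn pi1_pe pi2_pe) (simp add: prod_encode_def)
qed

lemma pi2_formula: "pi2 x = bsearch (\<lambda>s. x < triangle (Suc s)) (Suc x) - pi1 x"
  unfolding decode_sum by simp

definition rc :: "(nat \<Rightarrow> nat) \<Rightarrow> bool" where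
  "rc f \<longleftrightarrow> rec1 1 (\<lambda>xs. f (xs!0))"

lemma rc_id: "rc (\<lambda>x. x)" unfolding rc_def by (rule rec1_proj) simp
lemma rc_const: "rc (\<lambda>x. c)" unfolding rc_def by (rule rec1_const)

lemma rc_comp: "rc f \<Longrightarrow> rc g \<Longrightarrow> rc (\<lambda>x. f (g x))"
  unfolding rc_def using rec1_comp1 by blast

lemma rc_op2:
  assumes "rec1 2 (\<lambda>ys. F (ys!0) (ys!1))" "rc f" "rc g"
  shows "rc (\<lambda>x. F (f x) (g x))"
  using assms unfolding rc_def using rec1_comp2 by blast

lemma rc_Suc: "rc f \<Longrightarrow> rc (\<lambda>x. Suc (f x))"
  unfolding rc_def using rec1_Suc' by blast
lemma rc_add: "rc f \<Longrightarrow> rc g \<Longrightarrow> rc (\<lambda>x. f x + g x)"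
  using rc_op2[OF rec1_add] .
lemma rc_mult: "rc f \<Longrightarrow> rc g \<Longrightarrow> rc (\<lambda>x. f x * g x)"
  using rc_op2[OF rec1_mult] .
lemma rc_sub: "rc f \<Longrightarrow> rc g \<Longrightarrow> rc (\<lambda>x. f x - g x)"
  using rc_op2[OF rec1_sub] .
lemma rc_pe: "rc f \<Longrightarrow> rc g \<Longrightarrow> rc (\<lambda>x. pe (f x) (g x))"
  using rc_op2[OF rec1_pe] .
lemma rc_cond: "rc a \<Longrightarrow> rc b \<Longrightarrow> rc c \<Longrightarrow> rc (\<lambda>x. if a x = 0 then b x else c x)"
  unfolding rc_def using rec1_cond' by blast
lemma rc_triangle: "rc f \<Longrightarrow> rc (\<lambda>x. triangle (f x))"
  unfolding rc_def using rec1_comp1[OF rec1_triangle] by blast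
lemma rc_less01: "rc f \<Longrightarrow> rc g \<Longrightarrow> rc (\<lambda>x. if f x < g x then 1 else 0)"
  using rc_op2[OF rec1_less] .

lemma rc_bsearch0:
  assumes "rc p" "rc b"
  shows "rc (\<lambda>x. bsearch (\<lambda>y. p (pe y x) \<noteq> 0) (b x))"
proof -
  have "rec1 2 (\<lambda>xs. p (pe (xs!0) (xs!1)))"
    using rec1_comp1[OF assms(1)[unfolded rc_def] rec1_pe] .
  from rec1_bsearch[of "\<lambda>y x. p (pe y x)", OF this]
  have "rec1 2 (\<lambda>xs. bsearch (\<lambda>y. p (pe y (xs ! 1)) \<noteq> 0) (xs ! 0))" .
  from rec1_comp2[OF this assms(2)[unfolded rc_def] rec1_proj[of 0 1]] show ?thesis
    unfolding rc_def by simp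
qed

lemma rc_pi1: "rc pi1" and rc_pi2: "rc pi2"
proof -
  have "rec1 2 (\<lambda>xs. if xs!1 < triangle (Suc (xs!0)) then 1 else 0)"
    by (rule rec1_comp2[OF rec1_less]) (auto intro!: rec1_intros rec1_comp1[OF rec1_triangle])
  from rec1_bsearch[OF this]
  have "rec1 2 (\<lambda>xs. bsearch (\<lambda>y. (if xs!1 < triangle (Suc y) then 1 else 0) \<noteq> (0::nat)) (xs!0))" .
  then have "rec1 2 (\<lambda>xs. bsearch (\<lambda>y. xs!1 < triangle (Suc y)) (xs!0))" by simp
  from rec1_comp2[OF this rec1_Suc'[OF rec1_proj[of 0 1]] rec1_proj[of 0 1]]
  have S: "rc (\<lambda>x. bsearch (\<lambda>s. x < triangle (Suc s)) (Suc x))" unfolding rc_def by simp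
  have "rc (\<lambda>x. x - triangle (bsearch (\<lambda>s. x < triangle (Suc s)) (Suc x)))"
    by (rule rc_sub[OF rc_id rc_triangle[OF S]])
  then show "rc pi1" unfolding pi1_formula[abs_def] .
  then show "rc pi2" unfolding pi2_formula[abs_def] using rc_sub[OF S] by blast
qed


lemma rc_rec:
  assumes "rc g" "rc h" "rc k"
  shows "rc (\<lambda>x. rec_nat (g x) (\<lambda>i a. h (pe i (pe a x))) (k x))"
proof -
  have H: "rec1 3 (\<lambda>zs. h (pe (zs!0) (pe (zs!1) (zs!2))))"
    by (rule rec1_comp1[OF assms(2)[unfolded rc_def]])
       (auto intro!: rec1_comp2[OF rec1_pe] rec1_proj)
  have "rec1 2 (\<lambda>xs. rec_nat (g (xs!1)) (\<lambda>i a. (\<lambda>i a x. h (pe i (pe a x))) i a (xs!1)) (xs!0))"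
    by (rule rec1_prec2) (use H assms(1) in \<open>simp_all add: rc_def\<close>)
  from rec1_comp2[OF this assms(3)[unfolded rc_def] rec1_proj[of 0 1]] show ?thesis
    unfolding rc_def by simp
qed

lemma rc_cong: "rc f \<Longrightarrow> (\<And>x. f x = g x) \<Longrightarrow> rc g"
proof -
  assume "rc f" "\<And>x. f x = g x"
  then have "f = g" by auto
  then show "rc g" using \<open>rc f\<close> by simp
qed

definition rcp :: "(nat \<Rightarrow> bool) \<Rightarrow> bool" where
  "rcp P \<longleftrightarrow> rc (\<lambda>x. if P x then 1 else 0)"

lemma rc_if: "rcp P \<Longrightarrow> rc b \<Longrightarrow> rc c \<Longrightarrow> rc (\<lambda>x. if P x then b x else c x)"
  unfolding rcp_def by (rule rc_cong[OF rc_cond[of "\<lambda>x. if P x then 1 else 0" c b]]) auto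

lemma rcp_cong: "rcp P \<Longrightarrow> (\<And>x. P x = Q x) \<Longrightarrow> rcp Q"
  unfolding rcp_def by simp


lemma rcp_less: "rc f \<Longrightarrow> rc g \<Longrightarrow> rcp (\<lambda>x. f x < g x)"
  unfolding rcp_def by (rule rc_less01)

lemma rcp_le: "rc f \<Longrightarrow> rc g \<Longrightarrow> rcp (\<lambda>x. f x \<le> g x)"
  using rcp_less[of f "\<lambda>x. Suc (g x)"] rc_Suc by (simp add: less_Suc_eq_le)

lemma rcp_const: "rcp (\<lambda>x. b)"
  unfolding rcp_def by (cases b) (simp_all add: rc_const)

lemma rcp_not: "rcp P \<Longrightarrow> rcp (\<lambda>x. \<not> P x)"
  unfolding rcp_def by (rule rc_cong[OF rc_cond[of "\<lambda>x. if P x then 1 else 0" "\<lambda>x. 1" "\<lambda>x. 0"]]) (auto simp: rc_const)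

lemma rcp_and: "rcp P \<Longrightarrow> rcp Q \<Longrightarrow> rcp (\<lambda>x. P x \<and> Q x)"
  unfolding rcp_def by (rule rc_cong[OF rc_mult[of "\<lambda>x. if P x then 1 else 0" "\<lambda>x. if Q x then 1 else 0"]]) auto

lemma rcp_or: "rcp P \<Longrightarrow> rcp Q \<Longrightarrow> rcp (\<lambda>x. P x \<or> Q x)"
  using rcp_not[OF rcp_and[OF rcp_not rcp_not]] by simp

lemma rcp_imp: "rcp P \<Longrightarrow> rcp Q \<Longrightarrow> rcp (\<lambda>x. P x \<longrightarrow> Q x)"
  using rcp_or[OF rcp_not] by simp

lemma rcp_eq: "rc f \<Longrightarrow> rc g \<Longrightarrow> rcp (\<lambda>x. f x = g x)"
  using rcp_and[OF rcp_le rcp_le, of f g g f] by (simp add: eq_iff)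

lemma rcp_iff: "rcp P \<Longrightarrow> rcp Q \<Longrightarrow> rcp (\<lambda>x. P x = Q x)"
  using rcp_and[OF rcp_imp rcp_imp, of P Q Q P] by (rule rcp_cong) auto

lemma rc_bsearch:
  assumes "rcp (\<lambda>z. P (pi1 z) (pi2 z))" "rc b"
  shows "rc (\<lambda>x. bsearch (\<lambda>y. P y x) (b x))"
  using rc_bsearch0[OF assms(1)[unfolded rcp_def] assms(2)] by simp

lemma rcp_ball:
  assumes "rcp (\<lambda>z. P (pi1 z) (pi2 z))" "rc b"
  shows "rcp (\<lambda>x. \<forall>y<b x. P y x)"
proof -
  have "rc (\<lambda>x. bsearch (\<lambda>y. \<not> P y x) (b x))"
    by (rule rc_bsearch[OF rcp_not[OF assms(1)] assms(2)])
  from rcp_not[OF rcp_less[OF this assms(2)]] show ?thesis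
    by (rule rcp_cong) (simp add: bsearch_less_iff)
qed

lemma rcp_bex:
  assumes "rcp (\<lambda>z. P (pi1 z) (pi2 z))" "rc b"
  shows "rcp (\<lambda>x. \<exists>y<b x. P y x)"
  using rcp_not[OF rcp_ball[OF rcp_not[OF assms(1)] assms(2)]] by simp

lemma rc_pi1': "rc f \<Longrightarrow> rc (\<lambda>x. pi1 (f x))" using rc_comp[OF rc_pi1] .
lemma rc_pi2': "rc f \<Longrightarrow> rc (\<lambda>x. pi2 (f x))" using rc_comp[OF rc_pi2] .

lemma rc_div: "rc f \<Longrightarrow> rc g \<Longrightarrow> rc (\<lambda>x. f x div g x)"
proof -
  assume f: "rc f" and g: "rc g"
  have "rcp (\<lambda>z. f (pi2 z) < Suc (pi1 z) * g (pi2 z))"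
    by (intro rcp_less rc_comp[OF f] rc_mult rc_Suc rc_comp[OF g] rc_pi1 rc_pi2)
  then have "rcp (\<lambda>z. (\<lambda>q x. f x < Suc q * g x) (pi1 z) (pi2 z))" by simp
  from rc_bsearch[OF this rc_Suc[OF f]]
  have B: "rc (\<lambda>x. bsearch (\<lambda>q. f x < Suc q * g x) (Suc (f x)))" .
  have "rc (\<lambda>x. if g x = 0 then 0 else bsearch (\<lambda>q. f x < Suc q * g x) (Suc (f x)))"
    by (rule rc_cond[OF g rc_const B])
  then show ?thesis
  proof (rule rc_cong)
    fix x
    show "(if g x = 0 then 0 else bsearch (\<lambda>q. f x < Suc q * g x) (Suc (f x))) = f x div g x"
    proof (cases "g x = 0")
      case False
      let ?q = "f x div g x"
      have P: "f x < Suc ?q * g x" using False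
      proof -
        have e1: "f x div g x * g x + f x mod g x = f x" by (rule div_mult_mod_eq)
        have e2: "f x mod g x < g x" using False by simp
        show ?thesis using e1 e2 by (simp only: mult_Suc)
      qed
      have nP: "\<not> f x < Suc q * g x" if "q < ?q" for q
      proof -
        have "Suc q * g x \<le> ?q * g x" using that by (intro mult_le_mono1) simp
        also have "\<dots> \<le> f x" by (rule div_times_less_eq_dividend)
        finally show ?thesis by simp
      qed
      have lt: "?q < Suc (f x)" by (simp add: le_imp_less_Suc)
      have "(LEAST q. f x < Suc q * g x) = ?q"
        by (rule Least_equality) (use P nP in \<open>auto simp: not_less[symmetric]\<close>)
      then show ?thesis using False P lt by (auto simp: bsearch_eq)
    qed simp
  qed
qed

lemma rc_mod: "rc f \<Longrightarrow> rc g \<Longrightarrow> rc (\<lambda>x. f x mod g x)"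
proof -
  assume f: "rc f" and g: "rc g"
  show ?thesis
    by (rule rc_cong[OF rc_sub[OF f rc_mult[OF rc_div[OF f g] g]]]) (simp add: minus_div_mult_eq_mod)
qed

lemma rc_pow2: "rc f \<Longrightarrow> rc (\<lambda>x. 2 ^ f x)"
proof -
  assume f: "rc f"
  have "rc (\<lambda>x. rec_nat 1 (\<lambda>i a. pi1 (pi2 (pe i (pe a x))) + pi1 (pi2 (pe i (pe a x)))) (f x))"
    by (rule rc_rec[OF rc_const _ f]) (intro rc_add rc_pi1' rc_pi2' rc_id)
  moreover have "rec_nat 1 (\<lambda>i a. a + a) k = (2::nat) ^ k" for k by (induction k) auto
  ultimately show ?thesis by simp
qed


definition hd_c :: "nat \<Rightarrow> nat" where "hd_c c = pi1 (c - 1)"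
definition tl_c :: "nat \<Rightarrow> nat" where "tl_c c = pi2 (c - 1)"
definition cons_c :: "nat \<Rightarrow> nat \<Rightarrow> nat" where "cons_c x c = Suc (pe x c)"
definition tlk :: "nat \<Rightarrow> nat \<Rightarrow> nat" where "tlk k c = rec_nat c (\<lambda>i a. tl_c a) k"
definition nth_c :: "nat \<Rightarrow> nat \<Rightarrow> nat" where "nth_c i c = hd_c (tlk i c)"
definition len_c :: "nat \<Rightarrow> nat" where "len_c c = bsearch (\<lambda>i. tlk i c = 0) (Suc c)"

lemma cons_c_le[simp]: "cons_c x (list_encode xs) = list_encode (x # xs)"
  by (simp add: cons_c_def)

lemma pi2_0: "pi2 0 = 0"
  using pi2_pe[of 0 0] by (simp add: prod_encode_def)

lemma tl_c_le: "tl_c (list_encode xs) = list_encode (tl xs)"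
  by (cases xs) (auto simp: tl_c_def pi2_0)

lemma hd_c_le: "xs \<noteq> [] \<Longrightarrow> hd_c (list_encode xs) = hd xs"
  by (cases xs) (auto simp: hd_c_def)

lemma tlk_le: "tlk i (list_encode xs) = list_encode (drop i xs)"
  by (induction i) (auto simp: tlk_def tl_c_le drop_Suc tl_drop)

lemma nth_c_le: "i < length xs \<Longrightarrow> nth_c i (list_encode xs) = xs ! i"
  by (simp add: nth_c_def tlk_le hd_c_le hd_drop_conv_nth)

lemma le_zero_iff: "list_encode xs = 0 \<longleftrightarrow> xs = []"
  by (cases xs) auto

lemma length_le_code: "length xs \<le> list_encode xs"
  by (induction xs) (auto simp: le_prod_encode_2 intro: order.trans[OF _ le_prod_encode_2])

lemma len_c_le: "len_c (list_encode xs) = length xs"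
proof -
  have ex: "length xs < Suc (list_encode xs)" using length_le_code[of xs] by simp
  have "(LEAST i. tlk i (list_encode xs) = 0) = length xs"
    by (rule Least_equality) (auto simp: tlk_le le_zero_iff)
  then show ?thesis using ex unfolding len_c_def bsearch_eq
    by (auto simp: tlk_le le_zero_iff)
qed

lemma rc_hd_c: "rc f \<Longrightarrow> rc (\<lambda>x. hd_c (f x))"
  unfolding hd_c_def by (intro rc_pi1' rc_sub rc_const)
lemma rc_tl_c: "rc f \<Longrightarrow> rc (\<lambda>x. tl_c (f x))"
  unfolding tl_c_def by (intro rc_pi2' rc_sub rc_const)
lemma rc_cons_c: "rc f \<Longrightarrow> rc g \<Longrightarrow> rc (\<lambda>x. cons_c (f x) (g x))"
  unfolding cons_c_def by (intro rc_Suc rc_pe)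

lemma rc_tlk: "rc f \<Longrightarrow> rc g \<Longrightarrow> rc (\<lambda>x. tlk (f x) (g x))"
proof -
  assume f: "rc f" and g: "rc g"
  have "rc (\<lambda>x. rec_nat (g x) (\<lambda>i a. tl_c (pi1 (pi2 (pe i (pe a x))))) (f x))"
    by (rule rc_rec[OF g _ f]) (intro rc_tl_c rc_pi1' rc_pi2' rc_id)
  then show ?thesis unfolding tlk_def by simp
qed

lemma rc_nth_c: "rc f \<Longrightarrow> rc g \<Longrightarrow> rc (\<lambda>x. nth_c (f x) (g x))"
  unfolding nth_c_def by (intro rc_hd_c rc_tlk)

lemma rc_len_c: "rc f \<Longrightarrow> rc (\<lambda>x. len_c (f x))"
proof -
  assume f: "rc f"
  have "rcp (\<lambda>z. (\<lambda>i x. tlk i (f x) = 0) (pi1 z) (pi2 z))"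
    by (intro rcp_eq rc_tlk rc_comp[OF f] rc_pi1 rc_pi2 rc_const)
  from rc_bsearch[OF this rc_Suc[OF f]] show ?thesis unfolding len_c_def .
qed

definition app_c :: "nat \<Rightarrow> nat \<Rightarrow> nat" where
  "app_c c e = rec_nat e (\<lambda>i a. cons_c (nth_c (len_c c - Suc i) c) a) (len_c c)"

lemma app_c_aux:
  "i \<le> length xs \<Longrightarrow>
   rec_nat (list_encode ys) (\<lambda>i a. cons_c (nth_c (length xs - Suc i) (list_encode xs)) a) i
   = list_encode (drop (length xs - i) xs @ ys)"
proof (induction i)
  case 0 then show ?case by simp
next
  case (Suc i)
  have d: "drop (length xs - Suc i) xs = xs ! (length xs - Suc i) # drop (length xs - i) xs"
  proof -
    have k: "length xs - Suc i < length xs" "Suc (length xs - Suc i) = length xs - i" using Suc.prems by auto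
    show ?thesis using Cons_nth_drop_Suc[OF k(1)] k(2) by simp
  qed
  show ?case using Suc by (simp add: d nth_c_le)
qed

lemma app_c_le: "app_c (list_encode xs) (list_encode ys) = list_encode (xs @ ys)"
  unfolding app_c_def len_c_le using app_c_aux[of "length xs" xs ys] by simp

lemma rc_app_c: "rc f \<Longrightarrow> rc g \<Longrightarrow> rc (\<lambda>x. app_c (f x) (g x))"
proof -
  assume f: "rc f" and g: "rc g"
  let ?w = "\<lambda>z. pi2 (pi2 z)"
  have "rc (\<lambda>x. rec_nat (g x) (\<lambda>i a. (\<lambda>w. cons_c (nth_c (len_c (f (pi2 (pi2 w))) - Suc (pi1 w)) (f (pi2 (pi2 w)))) (pi1 (pi2 w))) (pe i (pe a x))) (len_c (f x)))"
    by (rule rc_rec[OF g _ rc_len_c[OF f]])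
       (intro rc_cons_c rc_nth_c rc_sub rc_len_c rc_Suc rc_comp[OF f] rc_pi1' rc_pi2' rc_pi1 rc_pi2 rc_id)
  then show ?thesis unfolding app_c_def by simp
qed

definition memb :: "nat \<Rightarrow> nat \<Rightarrow> bool" where "memb x d \<longleftrightarrow> odd (d div 2 ^ x)"

lemma memb_set_encode: "finite D \<Longrightarrow> memb x (set_encode D) \<longleftrightarrow> x \<in> D"
  using set_encode_inverse[of D] unfolding memb_def set_decode_def by blast

lemma rcp_memb: "rc f \<Longrightarrow> rc g \<Longrightarrow> rcp (\<lambda>x. memb (f x) (g x))"
proof -
  assume f: "rc f" and g: "rc g"
  have "rcp (\<lambda>x. (g x div 2 ^ f x) mod 2 = 1)"
    by (intro rcp_eq rc_mod rc_div rc_pow2 f g rc_const)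
  then show ?thesis by (rule rcp_cong) (simp add: memb_def odd_iff_mod_2_eq_one)
qed


definition enc :: "nat option \<Rightarrow> nat" where "enc c = (case c of None \<Rightarrow> 0 | Some x \<Rightarrow> Suc x)"
definition dec :: "nat \<Rightarrow> nat option" where "dec n = (case n of 0 \<Rightarrow> None | Suc x \<Rightarrow> Some x)"
definition sq :: "nat \<Rightarrow> nat option list" where "sq c = map dec (list_decode c)"

lemma seq_code_enc: "seq_code s = list_encode (map enc s)"
  unfolding seq_code_def enc_def by simp

lemma enc_dec[simp]: "enc (dec n) = n" by (cases n) (auto simp: enc_def dec_def)
lemma dec_enc[simp]: "dec (enc c) = c" by (cases c) (auto simp: enc_def dec_def)

lemma seq_code_sq[simp]: "seq_code (sq c) = c"
  unfolding seq_code_enc sq_def by (simp add: comp_def)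

lemma sq_seq_code[simp]: "sq (seq_code s) = s"
  unfolding seq_code_enc sq_def by (simp add: comp_def)

lemma seq_code_inj: "seq_code s = seq_code t \<longleftrightarrow> s = t"
  by (metis sq_seq_code)

lemma finite_content_list[simp]: "finite (content_list s)"
proof -
  have "content_list s \<subseteq> the ` set s" unfolding content_list_def by force
  then show ?thesis by (rule finite_subset) simp
qed

lemma content_list_append[simp]: "content_list (s @ t) = content_list s \<union> content_list t"
  unfolding content_list_def by auto

lemma content_list_Cons: "content_list (c # s) = (case c of None \<Rightarrow> {} | Some x \<Rightarrow> {x}) \<union> content_list s"
  unfolding content_list_def by (cases c) auto

lemma content_list_Nil[simp]: "content_list [] = {}"
  unfolding content_list_def by auto

definition seqok :: "nat \<Rightarrow> nat \<Rightarrow> bool" where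
  "seqok d c \<longleftrightarrow> (\<forall>i<len_c c. nth_c i c = 0 \<or> memb (nth_c i c - 1) d)"

lemma seqok_iff:
  assumes "finite D"
  shows "seqok (set_encode D) (seq_code s) \<longleftrightarrow> content_list s \<subseteq> D"
proof -
  have n: "nth_c i (seq_code s) = enc (s ! i)" if "i < length s" for i
    unfolding seq_code_enc using that by (simp add: nth_c_le)
  have l: "len_c (seq_code s) = length s" unfolding seq_code_enc by (simp add: len_c_le)
  have "seqok (set_encode D) (seq_code s) \<longleftrightarrow> (\<forall>i<length s. enc (s!i) = 0 \<or> enc (s!i) - 1 \<in> D)"
    unfolding seqok_def l using n memb_set_encode[OF assms] by auto
  also have "\<dots> \<longleftrightarrow> (\<forall>i<length s. \<forall>x. s!i = Some x \<longrightarrow> x \<in> D)"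
    by (intro all_cong1 imp_cong refl) (auto simp: enc_def split: option.split)
  also have "\<dots> \<longleftrightarrow> content_list s \<subseteq> D"
    unfolding content_list_def by (auto simp: in_set_conv_nth)
  finally show ?thesis .
qed

lemma rcp_seqok: "rc f \<Longrightarrow> rc g \<Longrightarrow> rcp (\<lambda>x. seqok (f x) (g x))"
proof -
  assume f: "rc f" and g: "rc g"
  have "rcp (\<lambda>z. (\<lambda>i x. nth_c i (g x) = 0 \<or> memb (nth_c i (g x) - 1) (f x)) (pi1 z) (pi2 z))"
    by (intro rcp_or rcp_eq rcp_memb rc_nth_c rc_sub rc_comp[OF f] rc_comp[OF g] rc_pi1 rc_pi2 rc_const)
  from rcp_ball[OF this rc_len_c[OF g]] show ?thesis unfolding seqok_def .
qed

definition setc :: "nat \<Rightarrow> nat" where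
  "setc c = rec_nat 0 (\<lambda>i a. if nth_c i c = 0 \<or> memb (nth_c i c - 1) a then a else a + 2 ^ (nth_c i c - 1)) (len_c c)"

lemma set_encode_insert': "finite D \<Longrightarrow> set_encode (insert x D) = (if x \<in> D then set_encode D else set_encode D + 2 ^ x)"
  by (auto simp: insert_absorb)

lemma setc_aux:
  "i \<le> length s \<Longrightarrow> rec_nat 0 (\<lambda>i a. if nth_c i (seq_code s) = 0 \<or> memb (nth_c i (seq_code s) - 1) a then a else a + 2 ^ (nth_c i (seq_code s) - 1)) i
     = set_encode (content_list (take i s))"
proof (induction i)
  case 0 then show ?case by simp
next
  case (Suc i)
  have n: "nth_c i (seq_code s) = enc (s ! i)"
    unfolding seq_code_enc using Suc.prems by (simp add: nth_c_le)
  have t: "take (Suc i) s = take i s @ [s ! i]" using Suc.prems by (simp add: take_Suc_conv_app_nth)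
  show ?case
  proof (cases "s ! i")
    case None
    then show ?thesis using Suc by (simp add: n t enc_def content_list_Cons)
  next
    case (Some x)
    then show ?thesis using Suc
      by (simp add: n t enc_def content_list_Cons memb_set_encode set_encode_insert' del: set_encode_insert)
  qed
qed

lemma setc_correct: "setc (seq_code s) = set_encode (content_list s)"
proof -
  have l: "len_c (seq_code s) = length s" unfolding seq_code_enc by (simp add: len_c_le)
  show ?thesis unfolding setc_def l using setc_aux[of "length s" s] by simp
qed

lemma rc_setc: "rc setc"
proof -
  have "rc (\<lambda>x. rec_nat 0 (\<lambda>i a. (\<lambda>w. if nth_c (pi1 w) (pi2 (pi2 w)) = 0 \<or> memb (nth_c (pi1 w) (pi2 (pi2 w)) - 1) (pi1 (pi2 w))
        then pi1 (pi2 w) else pi1 (pi2 w) + 2 ^ (nth_c (pi1 w) (pi2 (pi2 w)) - 1)) (pe i (pe a x))) (len_c x))"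
    by (rule rc_rec[OF rc_const _ rc_len_c[OF rc_id]])
       (intro rc_if rcp_or rcp_eq rcp_memb rc_add rc_pow2 rc_nth_c rc_sub rc_pi1' rc_pi2' rc_pi1 rc_pi2 rc_id rc_const)
  then show ?thesis unfolding setc_def[abs_def] pi1_pe pi2_pe .
qed


lemma hd_c_cons[simp]: "hd_c (Suc (pe a b)) = a" by (simp add: hd_c_def)
lemma tl_c_cons[simp]: "tl_c (Suc (pe a b)) = b" by (simp add: tl_c_def)

definition clocks :: "nat \<Rightarrow> (nat list \<Rightarrow> nat option) \<Rightarrow> (nat \<Rightarrow> nat) \<Rightarrow> bool" where
  "clocks n f C \<longleftrightarrow> rc C \<and>
     (\<forall>xs s y. length xs = n \<longrightarrow> C (pe s (list_encode xs)) = Suc y \<longrightarrow> f xs = Some y) \<and>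
     (\<forall>xs y. length xs = n \<longrightarrow> f xs = Some y \<longrightarrow> eventually (\<lambda>s. C (pe s (list_encode xs)) = Suc y) sequentially)"

lemma clocks_zero: "clocks n (\<lambda>xs. Some 0) (\<lambda>z. 1)"
  unfolding clocks_def by (auto simp: rc_const)

lemma clocks_succ: "clocks 1 (\<lambda>xs. Some (Suc (hd xs))) (\<lambda>z. Suc (Suc (hd_c (pi2 z))))"
  unfolding clocks_def by (auto simp: len1 intro!: rc_Suc rc_hd_c rc_pi2)

lemma clocks_proj: "i < n \<Longrightarrow> clocks n (\<lambda>xs. Some (xs ! i)) (\<lambda>z. Suc (nth_c i (pi2 z)))"
  unfolding clocks_def by (auto simp: nth_c_le intro!: rc_Suc rc_nth_c rc_pi2 rc_const)

fun allnz :: "(nat \<Rightarrow> nat) list \<Rightarrow> nat \<Rightarrow> nat" where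
  "allnz [] z = 1"
| "allnz (C # Cs) z = C z * allnz Cs z"

fun argc :: "(nat \<Rightarrow> nat) list \<Rightarrow> nat \<Rightarrow> nat" where
  "argc [] z = 0"
| "argc (C # Cs) z = cons_c (C z - 1) (argc Cs z)"

lemma allnz_iff: "allnz Cs z \<noteq> 0 \<longleftrightarrow> (\<forall>C\<in>set Cs. C z \<noteq> 0)"
  by (induction Cs) auto

lemma argc_eq: "argc Cs z = list_encode (map (\<lambda>C. C z - 1) Cs)"
  by (induction Cs) (auto simp: cons_c_def)

lemma rc_allnz: "\<forall>C\<in>set Cs. rc C \<Longrightarrow> rc (allnz Cs)"
proof (induction Cs)
  case Nil then show ?case by (simp add: rc_const)
next
  case (Cons C Cs)
  then have "rc (\<lambda>z. C z * allnz Cs z)" by (intro rc_mult) (auto simp: rc_cong)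
  then show ?case by (simp add: rc_cong)
qed

lemma rc_argc: "\<forall>C\<in>set Cs. rc C \<Longrightarrow> rc (argc Cs)"
proof (induction Cs)
  case Nil then show ?case by (simp add: rc_const)
next
  case (Cons C Cs)
  then have "rc (\<lambda>z. cons_c (C z - 1) (argc Cs z))" by (intro rc_cons_c rc_sub rc_const) auto
  then show ?case by simp
qed

lemma clocks_comp:
  assumes g: "clocks m g Cg" and len: "length fs = m"
    and fs: "\<forall>f\<in>set fs. clocks n f (F f)"
  shows "clocks n (comp_op g fs) (\<lambda>z. if allnz (map F fs) z = 0 then 0 else Cg (pe (pi1 z) (argc (map F fs) z)))"
  unfolding clocks_def
proof (intro conjI allI impI)
  have rcF: "\<forall>C\<in>set (map F fs). rc C" using fs unfolding clocks_def by auto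
  show "rc (\<lambda>z. if allnz (map F fs) z = 0 then 0 else Cg (pe (pi1 z) (argc (map F fs) z)))"
    using g unfolding clocks_def
    by (intro rc_cond rc_allnz[OF rcF] rc_const) (auto intro!: rc_comp[of Cg] rc_pe rc_pi1 rc_argc[OF rcF])
next
  fix xs s y
  assume lx: "length xs = n"
    and C: "(if allnz (map F fs) (pe s (list_encode xs)) = 0 then 0 else Cg (pe (pi1 (pe s (list_encode xs))) (argc (map F fs) (pe s (list_encode xs))))) = Suc y"
  let ?z = "pe s (list_encode xs)"
  have nz: "allnz (map F fs) ?z \<noteq> 0" using C by (auto split: if_splits)
  then have nz': "\<forall>f\<in>set fs. F f ?z \<noteq> 0" using allnz_iff by auto
  have fv: "f xs = Some (F f ?z - 1)" if "f \<in> set fs" for f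
  proof -
    have "F f ?z = Suc (F f ?z - 1)" using nz' that by auto
    then show ?thesis using fs that lx unfolding clocks_def by blast
  qed
  have vals: "map (\<lambda>f. the (f xs)) fs = map (\<lambda>C. C ?z - 1) (map F fs)"
    by (simp add: fv)
  have "Cg (pe s (list_encode (map (\<lambda>f. the (f xs)) fs))) = Suc y"
    using C nz by (simp add: argc_eq vals)
  then have "g (map (\<lambda>f. the (f xs)) fs) = Some y" using g len unfolding clocks_def by auto
  moreover have "\<forall>f\<in>set fs. f xs \<noteq> None" using fv by auto
  ultimately show "comp_op g fs xs = Some y" unfolding comp_op_def by simp
next
  fix xs y
  assume lx: "length xs = n" and cy: "comp_op g fs xs = Some y"
  have def: "\<forall>f\<in>set fs. f xs \<noteq> None" using cy unfolding comp_op_def by (auto split: if_splits)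
  let ?vals = "map (\<lambda>f. the (f xs)) fs"
  have gy: "g ?vals = Some y" using cy def unfolding comp_op_def by simp
  have ev1: "eventually (\<lambda>s. \<forall>f\<in>set fs. F f (pe s (list_encode xs)) = Suc (the (f xs))) sequentially"
  proof (rule eventually_ball_finite)
    show "\<forall>f\<in>set fs. eventually (\<lambda>s. F f (pe s (list_encode xs)) = Suc (the (f xs))) sequentially"
      using fs def lx unfolding clocks_def by auto
  qed simp
  have ev2: "eventually (\<lambda>s. Cg (pe s (list_encode ?vals)) = Suc y) sequentially"
    using g gy len unfolding clocks_def by auto
  show "eventually (\<lambda>s. (if allnz (map F fs) (pe s (list_encode xs)) = 0 then 0
      else Cg (pe (pi1 (pe s (list_encode xs))) (argc (map F fs) (pe s (list_encode xs))))) = Suc y) sequentially"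
    using ev1 ev2
  proof eventually_elim
    case (elim s)
    have "allnz (map F fs) (pe s (list_encode xs)) \<noteq> 0" using elim(1) allnz_iff by auto
    moreover have "argc (map F fs) (pe s (list_encode xs)) = list_encode ?vals"
    proof -
      have "map (\<lambda>C. C (pe s (list_encode xs)) - 1) (map F fs) = ?vals"
        unfolding map_map by (rule map_cong) (use elim(1) in auto)
      then show ?thesis by (simp only: argc_eq)
    qed
    ultimately show ?case using elim(2) by simp
  qed
qed


lemma clocks_sound: "clocks n f C \<Longrightarrow> length xs = n \<Longrightarrow> C (pe s (list_encode xs)) = Suc y \<Longrightarrow> f xs = Some y"
  unfolding clocks_def by blast
lemma clocks_complete: "clocks n f C \<Longrightarrow> length xs = n \<Longrightarrow> f xs = Some y \<Longrightarrow> eventually (\<lambda>s. C (pe s (list_encode xs)) = Suc y) sequentially"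
  unfolding clocks_def by blast

definition Rp :: "(nat \<Rightarrow> nat) \<Rightarrow> (nat \<Rightarrow> nat) \<Rightarrow> nat \<Rightarrow> nat \<Rightarrow> nat \<Rightarrow> nat" where
  "Rp Cg Ch s yc k = rec_nat (Cg (pe s yc)) (\<lambda>i a. if a = 0 then 0 else Ch (pe s (cons_c i (cons_c (a - 1) yc)))) k"

lemma clocks_prec:
  assumes g: "clocks n g Cg" and h: "clocks (Suc (Suc n)) h Ch"
  shows "clocks (Suc n) (prim_rec_op g h) (\<lambda>z. Rp Cg Ch (pi1 z) (tl_c (pi2 z)) (hd_c (pi2 z)))"
  unfolding clocks_def
proof (intro conjI allI impI)
  have rg: "rc Cg" and rh: "rc Ch" using g h unfolding clocks_def by auto
  have "rc (\<lambda>x. rec_nat (Cg (pe (pi1 x) (tl_c (pi2 x))))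
     (\<lambda>i a. (\<lambda>w. if pi1 (pi2 w) = 0 then 0 else Ch (pe (pi1 (pi2 (pi2 w))) (cons_c (pi1 w) (cons_c (pi1 (pi2 w) - 1) (tl_c (pi2 (pi2 (pi2 w)))))))) (pe i (pe a x)))
     (hd_c (pi2 x)))"
    by (rule rc_rec) (intro rc_comp[OF rg] rc_comp[OF rh] rc_cond rc_pe rc_cons_c rc_sub rc_tl_c rc_hd_c rc_pi1' rc_pi2' rc_pi1 rc_pi2 rc_id rc_const)+
  then show "rc (\<lambda>z. Rp Cg Ch (pi1 z) (tl_c (pi2 z)) (hd_c (pi2 z)))"
    unfolding Rp_def pi1_pe pi2_pe .
next
  fix xs s y
  assume lx: "length xs = Suc n" and C: "Rp Cg Ch (pi1 (pe s (list_encode xs))) (tl_c (pi2 (pe s (list_encode xs)))) (hd_c (pi2 (pe s (list_encode xs)))) = Suc y"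
  obtain k ys where xs: "xs = k # ys" and ly: "length ys = n" using lx by (cases xs) auto
  have "Rp Cg Ch s (list_encode ys) k = Suc y \<Longrightarrow> prim_rec_op g h (k # ys) = Some y" for y
  proof (induction k arbitrary: y)
    case 0
    then show ?case using g ly unfolding clocks_def Rp_def by auto
  next
    case (Suc k)
    from Suc.prems obtain a where a: "Rp Cg Ch s (list_encode ys) k = Suc a"
      and hy: "Ch (pe s (list_encode (k # a # ys))) = Suc y"
      unfolding Rp_def by (auto split: if_splits simp: gr0_conv_Suc cons_c_def)
    have "h (k # a # ys) = Some y" using h hy ly unfolding clocks_def by auto
    then show ?case using Suc.IH[OF a] by simp
  qed
  then show "prim_rec_op g h xs = Some y" using C by (simp add: xs)
next
  fix xs y
  assume lx: "length xs = Suc n" and fy: "prim_rec_op g h xs = Some y"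
  obtain k ys where xs: "xs = k # ys" and ly: "length ys = n" using lx by (cases xs) auto
  have "prim_rec_op g h (k # ys) = Some y \<Longrightarrow> eventually (\<lambda>s. Rp Cg Ch s (list_encode ys) k = Suc y) sequentially" for y
  proof (induction k arbitrary: y)
    case 0
    then show ?case using g ly unfolding clocks_def Rp_def by auto
  next
    case (Suc k)
    from Suc.prems obtain a where a: "prim_rec_op g h (k # ys) = Some a" and hy: "h (k # a # ys) = Some y"
      by (cases "prim_rec_op g h (k # ys)") auto
    have e1: "eventually (\<lambda>s. Rp Cg Ch s (list_encode ys) k = Suc a) sequentially" using Suc.IH[OF a] .
    have e2: "eventually (\<lambda>s. Ch (pe s (list_encode (k # a # ys))) = Suc y) sequentially"
      using clocks_complete[OF h _ hy] ly by simp
    from e1 e2 show ?case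
      by eventually_elim (simp add: Rp_def cons_c_def)
  qed
  then show "eventually (\<lambda>s. Rp Cg Ch (pi1 (pe s (list_encode xs))) (tl_c (pi2 (pe s (list_encode xs)))) (hd_c (pi2 (pe s (list_encode xs)))) = Suc y) sequentially"
    using fy by (simp add: xs)
qed


definition Pm :: "(nat \<Rightarrow> nat) \<Rightarrow> nat \<Rightarrow> nat \<Rightarrow> nat \<Rightarrow> bool" where
  "Pm Cf s c y \<longleftrightarrow> Cf (pe s (cons_c y c)) = 1 \<and> (\<forall>w<y. Cf (pe s (cons_c w c)) \<noteq> 0)"

definition Cmu :: "(nat \<Rightarrow> nat) \<Rightarrow> nat \<Rightarrow> nat" where
  "Cmu Cf z = (if bsearch (Pm Cf (pi1 z) (pi2 z)) (pi1 z) < pi1 z then Suc (bsearch (Pm Cf (pi1 z) (pi2 z)) (pi1 z)) else 0)"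

lemma rc_Cmu: "rc Cf \<Longrightarrow> rc (Cmu Cf)"
proof -
  assume f: "rc Cf"
  have b1: "rcp (\<lambda>v. (\<lambda>w u. Cf (pe (pi1 (pi2 u)) (cons_c w (pi2 (pi2 u)))) \<noteq> 0) (pi1 v) (pi2 v))"
    by (intro rcp_not rcp_eq rc_comp[OF f] rc_pe rc_cons_c rc_pi1' rc_pi2' rc_pi1 rc_pi2 rc_id rc_const)
  have b2: "rcp (\<lambda>u. \<forall>w<pi1 u. Cf (pe (pi1 (pi2 u)) (cons_c w (pi2 (pi2 u)))) \<noteq> 0)"
    using rcp_ball[OF b1 rc_pi1] by simp
  have b3: "rcp (\<lambda>u. Cf (pe (pi1 (pi2 u)) (cons_c (pi1 u) (pi2 (pi2 u)))) = 1)"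
    by (intro rcp_eq rc_comp[OF f] rc_pe rc_cons_c rc_pi1' rc_pi2' rc_pi1 rc_pi2 rc_id rc_const)
  have "rcp (\<lambda>u. (\<lambda>y z. Pm Cf (pi1 z) (pi2 z) y) (pi1 u) (pi2 u))"
    unfolding Pm_def using rcp_and[OF b3 b2] by simp
  from rc_bsearch[OF this rc_pi1]
  have B: "rc (\<lambda>z. bsearch (Pm Cf (pi1 z) (pi2 z)) (pi1 z))" by simp
  show ?thesis unfolding Cmu_def[abs_def]
    by (rule rc_if[OF rcp_less[OF B rc_pi1] rc_Suc[OF B] rc_const])
qed

lemma clocks_mu:
  assumes f: "clocks (Suc n) f Cf"
  shows "clocks n (mu_op f) (Cmu Cf)"
  unfolding clocks_def
proof (intro conjI allI impI)
  show "rc (Cmu Cf)" using rc_Cmu f unfolding clocks_def by auto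
next
  fix xs s y
  assume lx: "length xs = n" and C: "Cmu Cf (pe s (list_encode xs)) = Suc y"
  let ?c = "list_encode xs"
  let ?P = "Pm Cf s ?c"
  have lt: "bsearch ?P s < s" and yb: "y = bsearch ?P s"
    using C unfolding Cmu_def by (auto split: if_splits)
  have Py: "?P y" using bsearch_found[OF lt] yb by simp
  have mn: "\<not> ?P w" if "w < y" for w using bsearch_min that yb by blast
  have cs: "Cf (pe s (list_encode (w # xs))) = Suc v \<Longrightarrow> f (w # xs) = Some v" for w v
    using clocks_sound[OF f] lx by simp
  have f0: "f (y # xs) = Some 0" using Py cs unfolding Pm_def by simp
  have fdef: "f (w # xs) \<noteq> None" if "w < y" for w
  proof -
    have "Cf (pe s (cons_c w ?c)) \<noteq> 0" using Py that unfolding Pm_def by auto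
    then obtain v where "Cf (pe s (cons_c w ?c)) = Suc v" by (cases "Cf (pe s (cons_c w ?c))") auto
    then show ?thesis using cs by simp
  qed
  let ?Q = "\<lambda>y. f (y # xs) = Some 0 \<and> (\<forall>z<y. f (z # xs) \<noteq> None)"
  have Qy: "?Q y" using f0 fdef by auto
  have "(LEAST y. ?Q y) = y"
  proof (rule Least_equality)
    show "?Q y" by (rule Qy)
  next
    fix y' assume Q': "?Q y'"
    show "y \<le> y'"
    proof (rule ccontr)
      assume "\<not> y \<le> y'"
      then have y'y: "y' < y" by simp
      have nz: "Cf (pe s (cons_c y' ?c)) \<noteq> 0" using Py y'y unfolding Pm_def by auto
      then obtain v where v: "Cf (pe s (cons_c y' ?c)) = Suc v" by (cases "Cf (pe s (cons_c y' ?c))") auto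
      then have "f (y' # xs) = Some v" using cs by simp
      then have "v = 0" using Q' by simp
      then have "?P y'" using v Py y'y unfolding Pm_def by auto
      then show False using mn y'y by blast
    qed
  qed
  then show "mu_op f xs = Some y" unfolding mu_op_def using Qy by auto
next
  fix xs y
  assume lx: "length xs = n" and my: "mu_op f xs = Some y"
  let ?c = "list_encode xs"
  let ?Q = "\<lambda>y. f (y # xs) = Some 0 \<and> (\<forall>z<y. f (z # xs) \<noteq> None)"
  have ex: "\<exists>y. ?Q y"
  proof (rule ccontr)
    assume "\<not> (\<exists>y. ?Q y)"
    then have "mu_op f xs = None" unfolding mu_op_def by (simp only: if_False)
    then show False using my by simp
  qed
  have yL: "y = (LEAST y. ?Q y)"
  proof -
    have "mu_op f xs = Some (LEAST y. ?Q y)" unfolding mu_op_def using ex by (simp only: if_True)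
    then show ?thesis using my by simp
  qed
  have Qy: "?Q y" using LeastI_ex[OF ex] unfolding yL[symmetric] .
  have nQ: "\<not> ?Q w" if "w < y" for w using not_less_Least[of w ?Q] that unfolding yL[symmetric] by blast
  have fw': "f (w # xs) \<noteq> None" if "w \<le> y" for w
    using Qy that by (cases "w = y") auto
  have nz: "the (f (w # xs)) \<noteq> 0" if "w < y" for w
  proof
    assume "the (f (w # xs)) = 0"
    then have "f (w # xs) = Some 0" using fw'[of w] that by (cases "f (w # xs)") auto
    moreover have "\<forall>z<w. f (z # xs) \<noteq> None" using Qy that by auto
    ultimately show False using nQ[OF that] by simp
  qed
  have ev1: "eventually (\<lambda>s. \<forall>w\<in>{..y}. Cf (pe s (list_encode (w # xs))) = Suc (the (f (w # xs)))) sequentially"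
  proof (rule eventually_ball_finite)
    show "\<forall>w\<in>{..y}. eventually (\<lambda>s. Cf (pe s (list_encode (w # xs))) = Suc (the (f (w # xs)))) sequentially"
    proof
      fix w assume "w \<in> {..y}"
      then have "f (w # xs) = Some (the (f (w # xs)))" using fw'[of w] by (cases "f (w # xs)") auto
      from clocks_complete[OF f _ this] lx
      show "eventually (\<lambda>s. Cf (pe s (list_encode (w # xs))) = Suc (the (f (w # xs)))) sequentially" by simp
    qed
  qed simp
  have ev2: "eventually (\<lambda>s. y < s) sequentially" by (rule eventually_gt_at_top)
  from ev1 ev2 show "eventually (\<lambda>s. Cmu Cf (pe s ?c) = Suc y) sequentially"
  proof eventually_elim
    case (elim s)
    let ?P = "Pm Cf s ?c"
    have cw: "Cf (pe s (cons_c w ?c)) = Suc (the (f (w # xs)))" if "w \<le> y" for w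
      using elim(1) that by simp
    have c1: "Cf (pe s (cons_c y ?c)) = 1" using cw[of y] Qy by simp
    have c2: "\<forall>w<y. Cf (pe s (cons_c w ?c)) \<noteq> 0"
    proof (intro allI impI)
      fix w assume "w < y"
      then show "Cf (pe s (cons_c w ?c)) \<noteq> 0" using cw[of w] by simp
    qed
    have Py: "?P y" unfolding Pm_def using c1 c2 by blast
    have nP: "\<not> ?P w" if "w < y" for w
    proof -
      have "Cf (pe s (cons_c w ?c)) \<noteq> 1" using cw[of w] nz[OF that] that by simp
      then show ?thesis unfolding Pm_def by blast
    qed
    have "(LEAST w. ?P w) = y"
      by (rule Least_equality) (use Py nP in \<open>auto simp: not_less[symmetric]\<close>)
    then have "bsearch ?P s = y" using Py elim(2) by (auto simp: bsearch_eq)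
    then show ?case using elim(2) unfolding Cmu_def by simp
  qed
qed

theorem partrec_clocks: "partrec n f \<Longrightarrow> \<exists>C. clocks n f C"
proof (induction rule: partrec.induct)
  case (zero n) then show ?case using clocks_zero by blast
next
  case succ then show ?case using clocks_succ by blast
next
  case (proj i n) then show ?case using clocks_proj by blast
next
  case (comp m g fs n)
  obtain Cg where Cg: "clocks m g Cg" using comp by blast
  have "\<forall>f\<in>set fs. \<exists>C. clocks n f C" using comp by blast
  from bchoice[OF this] obtain F where "\<forall>f\<in>set fs. clocks n f (F f)" by blast
  then show ?case using clocks_comp[OF Cg \<open>length fs = m\<close>] by blast
next
  case (prec n g h) then show ?case using clocks_prec by blast
next
  case (mu n f) then show ?case using clocks_mu by blast
qed


lemma rc_pcomp: "rc r \<Longrightarrow> (\<lambda>x. Some (r x)) \<in> Rfun"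
proof -
  assume "rc r"
  then obtain f where f: "partrec 1 f" "\<forall>xs. length xs = 1 \<longrightarrow> f xs = Some (r (xs!0))"
    unfolding rc_def rec1_def by auto
  have "pcomp (\<lambda>x. Some (r x))" unfolding pcomp_def using f by (intro exI[of _ f]) auto
  then show ?thesis unfolding Rfun_def total_fn_def by auto
qed

lemma set_code_eq: "set_code D = set_encode D"
  unfolding set_code_def set_encode_def by simp

lemma length_initseg[simp]: "length (initseg T n) = n"
  by (simp add: initseg_def)

definition r2 :: "nat \<Rightarrow> nat" where "r2 c = pe (setc c) (len_c c)"

lemma rc_r2: "rc r2"
  unfolding r2_def[abs_def] by (intro rc_pe rc_comp[OF rc_setc] rc_len_c rc_id)

lemma len_c_seq_code: "len_c (seq_code s) = length s"
  unfolding seq_code_enc by (simp add: len_c_le)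

lemma r2_seq: "r2 (seq_code s) = prod_encode (set_code (content_list s), length s)"
  unfolding r2_def setc_correct len_c_seq_code set_code_eq ..

lemma Gbeta_r2: "Gbeta (h \<circ>\<^sub>m (\<lambda>x. Some (r2 x))) T i = Psd h T i"
  unfolding Gbeta_def Psd_def by (simp add: map_comp_def r2_seq)

lemma dir21:
  assumes I: "R_monoid I" and h: "h \<in> I"
    and lr: "\<forall>L\<in>\<L>. learns_CautEx \<phi> Psd h L" and df: "defined_on_Txt Psd h S"
  shows "\<exists>h\<in>I. (\<forall>L\<in>\<L>. learns_CautEx \<phi> Gbeta h L) \<and> defined_on_Txt Gbeta h S"
proof (intro bexI conjI)
  let ?h = "h \<circ>\<^sub>m (\<lambda>x. Some (r2 x))"
  have "(\<lambda>x. Some (r2 x)) \<in> I" using rc_pcomp[OF rc_r2] I unfolding R_monoid_def by auto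
  then show "?h \<in> I" using I h unfolding R_monoid_def by auto
  have eq: "Gbeta ?h = Psd h" by (intro ext) (rule Gbeta_r2)
  show "\<forall>L\<in>\<L>. learns_CautEx \<phi> Gbeta ?h L" using lr unfolding learns_CautEx_def eq .
  show "defined_on_Txt Gbeta ?h S" using df unfolding defined_on_Txt_def eq .
qed

definition shift :: "nat option list \<Rightarrow> ntext \<Rightarrow> ntext" where
  "shift s T = (\<lambda>i. if i < length s then s ! i else T (i - length s))"

lemma content_shift: "content (shift s T) = content_list s \<union> content T"
proof
  show "content (shift s T) \<subseteq> content_list s \<union> content T"
    unfolding content_def content_list_def shift_def
    by (auto split: if_splits simp: in_set_conv_nth) 
next
  show "content_list s \<union> content T \<subseteq> content (shift s T)"
  proof
    fix x assume "x \<in> content_list s \<union> content T"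
    then show "x \<in> content (shift s T)"
    proof
      assume "x \<in> content_list s"
      then obtain i where "i < length s" "s ! i = Some x" unfolding content_list_def by (auto simp: in_set_conv_nth)
      then show ?thesis unfolding content_def shift_def by (intro CollectI exI[of _ i]) simp
    next
      assume "x \<in> content T"
      then obtain i where "T i = Some x" unfolding content_def by auto
      then show ?thesis unfolding content_def shift_def by (intro CollectI exI[of _ "i + length s"]) simp
    qed
  qed
qed

lemma initseg_shift: "initseg (shift s T) (length s + n) = s @ initseg T n"
proof (rule nth_equalityI)
  show "length (initseg (shift s T) (length s + n)) = length (s @ initseg T n)" by simp
next
  fix i assume "i < length (initseg (shift s T) (length s + n))"
  then show "initseg (shift s T) (length s + n) ! i = (s @ initseg T n) ! i"
    by (auto simp: initseg_def shift_def nth_append)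
qed

lemma initseg_shift0: "initseg (shift s T) (length s) = s"
  using initseg_shift[of s T 0] by (simp add: initseg_def)

lemma locking_exists:
  fixes g :: "nat option list \<Rightarrow> nat option"
  assumes tot: "\<forall>T. content T = L \<longrightarrow> (\<forall>i. g (initseg T i) \<noteq> None)"
    and conv: "\<forall>T. content T = L \<longrightarrow> (\<exists>n0. \<forall>n\<ge>n0. g (initseg T n) = g (initseg T n0))"
  shows "\<exists>s. content_list s \<subseteq> L \<and> (\<forall>u. content_list u \<subseteq> L \<longrightarrow> g (s @ u) = g s)"
proof (rule ccontr)
  assume "\<not> ?thesis"
  then have "\<forall>s. \<exists>u. content_list s \<subseteq> L \<longrightarrow> content_list u \<subseteq> L \<and> g (s @ u) \<noteq> g s" by blast
  then obtain ext where ext: "\<And>s. content_list s \<subseteq> L \<Longrightarrow> content_list (ext s) \<subseteq> L \<and> g (s @ ext s) \<noteq> g s"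
    by metis
  define el where "el k = (if k \<in> L then Some k else None)" for k
  define seqs where "seqs = rec_nat [] (\<lambda>k s. s @ ext s @ [el k])"
  have sS: "seqs (Suc k) = seqs k @ ext (seqs k) @ [el k]" for k by (simp add: seqs_def)
  have s0: "seqs 0 = []" by (simp add: seqs_def)
  have elc: "content_list [el k] \<subseteq> L" for k by (auto simp: el_def content_list_def)
  have cs: "content_list (seqs k) \<subseteq> L" for k
    by (induction k) (use ext elc in \<open>auto simp: sS s0\<close>)
  have ls: "k \<le> length (seqs k)" for k by (induction k) (auto simp: sS s0)
  have pre: "\<exists>u. seqs m = seqs k @ u" if "k \<le> m" for k m
    using that
  proof (induction m)
    case 0 then show ?case by simp
  next
    case (Suc m)
    show ?case
    proof (cases "k = Suc m")
      case False
      then have "k \<le> m" using Suc.prems by simp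
      then obtain u where "seqs m = seqs k @ u" using Suc.IH by blast
      then show ?thesis by (simp add: sS)
    qed simp
  qed
  define T where "T i = seqs (Suc i) ! i" for i
  have Tn: "T i = seqs m ! i" if "i < length (seqs m)" for i m
  proof (cases "Suc i \<le> m")
    case True
    then obtain u where "seqs m = seqs (Suc i) @ u" using pre by blast
    moreover have "i < length (seqs (Suc i))" using ls[of "Suc i"] by simp
    ultimately show ?thesis unfolding T_def by (simp add: nth_append)
  next
    case False
    then obtain u where "seqs (Suc i) = seqs m @ u" using pre[of m "Suc i"] by auto
    then show ?thesis unfolding T_def using that by (simp add: nth_append)
  qed
  have iT: "initseg T n = take n (seqs m)" if "n \<le> length (seqs m)" for n m
    by (rule nth_equalityI) (use that Tn in \<open>auto simp: initseg_def\<close>)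
  have cT: "content T = L"
  proof
    show "content T \<subseteq> L"
    proof
      fix x assume "x \<in> content T"
      then obtain i where "T i = Some x" unfolding content_def by auto
      moreover have "i < length (seqs (Suc i))" using ls[of "Suc i"] by simp
      ultimately have "x \<in> content_list (seqs (Suc i))" unfolding T_def content_list_def
        by (metis mem_Collect_eq nth_mem)
      then show "x \<in> L" using cs by blast
    qed
  next
    show "L \<subseteq> content T"
    proof
      fix x assume "x \<in> L"
      let ?p = "length (seqs (Suc x)) - 1"
      have lp: "?p < length (seqs (Suc x))" by (simp add: sS)
      have "seqs (Suc x) ! ?p = el x" by (simp add: sS nth_append)
      then have "T ?p = Some x" using Tn[OF lp] \<open>x \<in> L\<close> by (simp add: el_def)
      then show "x \<in> content T" unfolding content_def by auto
    qed
  qed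
  obtain n0 where n0: "\<forall>n\<ge>n0. g (initseg T n) = g (initseg T n0)" using conv cT by blast
  let ?a = "length (seqs n0)"
  let ?b = "length (seqs n0 @ ext (seqs n0))"
  have ab: "n0 \<le> ?a" "?a \<le> ?b" using ls by auto
  have lb: "?b \<le> length (seqs (Suc n0))" by (simp add: sS)
  have "initseg T ?a = seqs n0" using iT[of ?a "Suc n0"] lb by (simp add: sS)
  moreover have "initseg T ?b = seqs n0 @ ext (seqs n0)" using iT[OF lb] by (simp add: sS)
  moreover have "g (seqs n0 @ ext (seqs n0)) \<noteq> g (seqs n0)" using ext cs by blast
  ultimately show False using n0 ab by (metis order.trans)
qed


definition reject :: "(nat \<Rightarrow> nat \<Rightarrow> nat) \<Rightarrow> nat \<Rightarrow> nat \<Rightarrow> nat \<Rightarrow> bool" where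
  "reject H d t c \<longleftrightarrow> (\<exists>e<Suc t. seqok d e \<and> H t c \<noteq> 0 \<and> H t (app_c c e) \<noteq> 0 \<and> H t c \<noteq> H t (app_c c e))"

definition cand :: "(nat \<Rightarrow> nat \<Rightarrow> nat) \<Rightarrow> nat \<Rightarrow> nat \<Rightarrow> nat \<Rightarrow> bool" where
  "cand H d t c \<longleftrightarrow> seqok d c \<and> \<not> reject H d t c"

definition rfun :: "(nat \<Rightarrow> nat \<Rightarrow> nat) \<Rightarrow> nat \<Rightarrow> nat" where
  "rfun H x = (if bsearch (cand H (pi1 x) (pi2 x)) (Suc (pi2 x)) < Suc (pi2 x)
               then bsearch (cand H (pi1 x) (pi2 x)) (Suc (pi2 x)) else 0)"

lemma rc_rfun:
  assumes rH: "\<And>a b. rc a \<Longrightarrow> rc b \<Longrightarrow> rc (\<lambda>x. H (a x) (b x))"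
  shows "rc (rfun H)"
proof -
  have p1: "rcp (\<lambda>v. (\<lambda>e u. seqok (pi1 (pi2 u)) e \<and> H (pi2 (pi2 u)) (pi1 u) \<noteq> 0 \<and>
       H (pi2 (pi2 u)) (app_c (pi1 u) e) \<noteq> 0 \<and> H (pi2 (pi2 u)) (pi1 u) \<noteq> H (pi2 (pi2 u)) (app_c (pi1 u) e)) (pi1 v) (pi2 v))"
    by (intro rcp_and rcp_seqok rcp_not rcp_eq rH rc_app_c rc_pi1' rc_pi2' rc_pi1 rc_pi2 rc_const)
  have p2: "rcp (\<lambda>u. reject H (pi1 (pi2 u)) (pi2 (pi2 u)) (pi1 u))"
    unfolding reject_def by (rule rcp_bex[OF p1]) (intro rc_Suc rc_pi2' rc_pi2)
  have p3: "rcp (\<lambda>u. (\<lambda>c x. cand H (pi1 x) (pi2 x) c) (pi1 u) (pi2 u))"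
    unfolding cand_def by (intro rcp_and rcp_not[OF p2] rcp_seqok rc_pi1' rc_pi2' rc_pi1 rc_pi2)
  have B: "rc (\<lambda>x. bsearch (\<lambda>c. cand H (pi1 x) (pi2 x) c) (Suc (pi2 x)))"
    by (rule rc_bsearch[OF p3]) (intro rc_Suc rc_pi2)
  show ?thesis unfolding rfun_def[abs_def]
    by (rule rc_if[OF rcp_less[OF B] B rc_const]) (intro rc_Suc rc_pi2)
qed

lemma out_shape:
  assumes "finite D"
  shows "\<exists>s. rfun H (pe (set_encode D) t) = seq_code s \<and> content_list s \<subseteq> D"
proof (cases "bsearch (cand H (set_encode D) t) (Suc t) < Suc t")
  case True
  let ?m = "bsearch (cand H (set_encode D) t) (Suc t)"
  have "cand H (set_encode D) t ?m" using bsearch_found[OF True] .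
  then have "seqok (set_encode D) (seq_code (sq ?m))" unfolding cand_def by simp
  then have "content_list (sq ?m) \<subseteq> D" using seqok_iff[OF assms] by blast
  moreover have "rfun H (pe (set_encode D) t) = seq_code (sq ?m)" using True unfolding rfun_def by simp
  ultimately show ?thesis by blast
next
  case False
  then have "rfun H (pe (set_encode D) t) = seq_code []" unfolding rfun_def by (simp add: seq_code_def)
  then show ?thesis by auto
qed

lemma app_c_seq: "app_c (seq_code s) (seq_code u) = seq_code (s @ u)"
  unfolding seq_code_enc by (simp add: app_c_le)

lemma content_initseg: "content_list (initseg T n) \<subseteq> content T"
  unfolding content_list_def content_def initseg_def by auto

lemma hdef_shift:
  assumes tot: "\<forall>T'. content T' = A \<longrightarrow> (\<forall>i. Gbeta h T' i \<noteq> None)"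
    and cT: "content T = A" and cs: "content_list s \<subseteq> A"
  shows "h (seq_code s) \<noteq> None"
proof -
  have "content (shift s T) = A" using cs cT by (auto simp: content_shift)
  then have "Gbeta h (shift s T) (length s) \<noteq> None" using tot by blast
  then show ?thesis unfolding Gbeta_def initseg_shift0 .
qed


context
  fixes h :: "nat \<Rightarrow> nat option" and H :: "nat \<Rightarrow> nat \<Rightarrow> nat"
  assumes Hs0: "\<forall>s y v. H s y = Suc v \<longrightarrow> h y = Some v"
    and Hc0: "\<forall>y v. h y = Some v \<longrightarrow> eventually (\<lambda>s. H s y = Suc v) sequentially"
begin

lemmas Hs = Hs0[rule_format]
lemmas Hc = Hc0[rule_format]

lemma Caut_part:
  assumes lrn: "learns_CautEx \<phi> Gbeta h L" and cT: "content T = L"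
  shows "CautTar \<phi> (\<lambda>i. the (h (rfun H (prod_encode (set_code (content_list (initseg T i)), i))))) T"
  unfolding CautTar_def
proof
  fix i
  let ?D = "content_list (initseg T i)"
  obtain s where s: "rfun H (pe (set_encode ?D) i) = seq_code s" "content_list s \<subseteq> ?D"
    using out_shape[of ?D H i] by auto
  have "content (shift s T) = L" using s(2) content_initseg[of T i] cT by (auto simp: content_shift)
  then have "CautTar \<phi> (\<lambda>i. the (Gbeta h (shift s T) i)) (shift s T)"
    using lrn unfolding learns_CautEx_def by blast
  then have "\<not> content (shift s T) \<subset> W \<phi> (the (Gbeta h (shift s T) (length s)))"
    unfolding CautTar_def by blast
  then show "\<not> content T \<subset> W \<phi> (the (h (rfun H (prod_encode (set_code ?D, i)))))"
    using \<open>content (shift s T) = L\<close> cT s(1)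
    by (simp add: Gbeta_def initseg_shift0 set_code_eq)
qed

lemma tot_part:
  assumes tot: "\<forall>T'. content T' = A \<longrightarrow> (\<forall>i. Gbeta h T' i \<noteq> None)" and cT: "content T = A"
  shows "h (rfun H (prod_encode (set_code (content_list (initseg T i)), i))) \<noteq> None"
proof -
  let ?D = "content_list (initseg T i)"
  obtain s where s: "rfun H (pe (set_encode ?D) i) = seq_code s" "content_list s \<subseteq> ?D"
    using out_shape[of ?D H i] by auto
  have "h (seq_code s) \<noteq> None"
    by (rule hdef_shift[OF tot cT]) (use s(2) content_initseg[of T i] cT in auto)
  then show ?thesis using s(1) by (simp add: set_code_eq)
qed

end


context
  fixes h :: "nat \<Rightarrow> nat option" and H :: "nat \<Rightarrow> nat \<Rightarrow> nat"
  assumes Hs0: "\<forall>s y v. H s y = Suc v \<longrightarrow> h y = Some v"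
    and Hc0: "\<forall>y v. h y = Some v \<longrightarrow> eventually (\<lambda>s. H s y = Suc v) sequentially"
begin

lemmas Hs2 = Hs0[rule_format]
lemmas Hc2 = Hc0[rule_format]

lemma Ex_part:
  assumes lrn: "learns_CautEx \<phi> Gbeta h L" and cT: "content T = L"
  shows "Ex \<phi> (\<lambda>i. the (h (rfun H (prod_encode (set_code (content_list (initseg T i)), i))))) T"
proof -
  define D where "D t = content_list (initseg T t)" for t
  define d where "d t = set_encode (D t)" for t
  have DL: "D t \<subseteq> L" for t unfolding D_def using content_initseg cT by blast
  have fD: "finite (D t)" for t unfolding D_def by simp
  have evF: "eventually (\<lambda>t. F \<subseteq> D t) sequentially" if F: "finite F" "F \<subseteq> L" for F
  proof -
    have "\<forall>x\<in>F. eventually (\<lambda>t. x \<in> D t) sequentially"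
    proof
      fix x assume "x \<in> F"
      then obtain i where i: "T i = Some x" using F cT unfolding content_def by auto
      have "eventually (\<lambda>t. i < t) sequentially" by (rule eventually_gt_at_top)
      then show "eventually (\<lambda>t. x \<in> D t) sequentially"
        by eventually_elim (use i in \<open>auto simp: D_def content_list_def initseg_def image_iff intro: bexI[of _ i]\<close>)
    qed
    then have "eventually (\<lambda>t. \<forall>x\<in>F. x \<in> D t) sequentially" by (rule eventually_ball_finite[OF F(1)])
    then show ?thesis by (simp add: subset_iff Ball_def)
  qed
  have tot: "\<forall>T'. content T' = L \<longrightarrow> (\<forall>i. Gbeta h T' i \<noteq> None)"
    using lrn unfolding learns_CautEx_def by blast
  have hdef: "content_list s \<subseteq> L \<Longrightarrow> h (seq_code s) \<noteq> None" for s
    using hdef_shift[OF tot cT] .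
  define g where "g s = h (seq_code s)" for s
  have totg: "\<forall>T'. content T' = L \<longrightarrow> (\<forall>i. g (initseg T' i) \<noteq> None)"
    using tot unfolding g_def Gbeta_def by blast
  have convg: "\<forall>T'. content T' = L \<longrightarrow> (\<exists>n0. \<forall>n\<ge>n0. g (initseg T' n) = g (initseg T' n0))"
  proof (intro allI impI)
    fix T' assume c: "content T' = L"
    then have "Ex \<phi> (\<lambda>i. the (Gbeta h T' i)) T'" using lrn unfolding learns_CautEx_def by blast
    then obtain n0 where n0: "\<forall>n\<ge>n0. the (g (initseg T' n)) = the (g (initseg T' n0))"
      unfolding Ex_def g_def Gbeta_def by blast
    have "\<forall>n\<ge>n0. g (initseg T' n) = g (initseg T' n0)"
    proof (intro allI impI)
      fix n assume "n \<ge> n0"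
      moreover have "g (initseg T' n) \<noteq> None" "g (initseg T' n0) \<noteq> None" using totg c by auto
      ultimately show "g (initseg T' n) = g (initseg T' n0)" using n0 by fastforce
    qed
    then show "\<exists>n0. \<forall>n\<ge>n0. g (initseg T' n) = g (initseg T' n0)" by blast
  qed
  define stab where "stab s \<longleftrightarrow> content_list s \<subseteq> L \<and> (\<forall>u. content_list u \<subseteq> L \<longrightarrow> g (s @ u) = g s)" for s
  obtain s0 where "stab s0" using locking_exists[OF totg convg] unfolding stab_def by blast
  then have exs: "\<exists>c. stab (sq c)" by (intro exI[of _ "seq_code s0"]) simp
  define cs where "cs = (LEAST c. stab (sq c))"
  define ss where "ss = sq cs"
  have stab_ss: "stab ss" unfolding ss_def cs_def using LeastI_ex[OF exs] .
  have cs_ss: "seq_code ss = cs" unfolding ss_def by simp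
  have notstab: "\<not> stab (sq c)" if "c < cs" for c using not_less_Least[of c "\<lambda>c. stab (sq c)"] that cs_def by simp
  obtain a where ha: "h cs = Some a"
    using hdef[of ss] stab_ss cs_ss unfolding stab_def by auto
  have Wa: "W \<phi> a = L"
  proof -
    have c: "content (shift ss T) = L" using stab_ss cT unfolding stab_def by (auto simp: content_shift)
    then have "Ex \<phi> (\<lambda>i. the (Gbeta h (shift ss T) i)) (shift ss T)" using lrn unfolding learns_CautEx_def by blast
    then obtain n0 where n0: "\<forall>n\<ge>n0. the (Gbeta h (shift ss T) n) = the (Gbeta h (shift ss T) n0)
        \<and> W \<phi> (the (Gbeta h (shift ss T) n0)) = content (shift ss T)" unfolding Ex_def by blast
    let ?n = "length ss + n0"
    have "Gbeta h (shift ss T) ?n = g (ss @ initseg T n0)" unfolding Gbeta_def g_def initseg_shift ..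
    also have "\<dots> = g ss" using stab_ss content_initseg[of T n0] cT unfolding stab_def by auto
    also have "\<dots> = Some a" using ha cs_ss unfolding g_def by simp
    finally have "the (Gbeta h (shift ss T) ?n) = a" by simp
    then show ?thesis using n0[rule_format, of ?n] c by simp
  qed
  have noreject: "\<not> reject H (d t) t cs" for t
  proof
    assume "reject H (d t) t cs"
    then obtain e where e: "seqok (d t) e" "H t cs \<noteq> 0" "H t (app_c cs e) \<noteq> 0" "H t cs \<noteq> H t (app_c cs e)"
      unfolding reject_def by blast
    obtain v1 where v1: "H t cs = Suc v1" using e(2) by (cases "H t cs") auto
    obtain v2 where v2: "H t (app_c cs e) = Suc v2" using e(3) by (cases "H t (app_c cs e)") auto
    have "content_list (sq e) \<subseteq> D t" using e(1) seqok_iff[OF fD, of t "sq e"] unfolding d_def by simp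
    then have ceL: "content_list (sq e) \<subseteq> L" using DL by blast
    have "app_c cs e = seq_code (ss @ sq e)" using app_c_seq[of ss "sq e"] cs_ss by simp
    then have "h (seq_code (ss @ sq e)) = Some v2" using Hs2[OF v2] by simp
    moreover have "h (seq_code ss) = Some v1" using Hs2[OF v1] cs_ss by simp
    moreover have "g (ss @ sq e) = g ss" using stab_ss ceL unfolding stab_def by blast
    ultimately have "v1 = v2" unfolding g_def by simp
    then show False using e(4) v1 v2 by simp
  qed
  have ev_cs: "eventually (\<lambda>t. cand H (d t) t cs) sequentially"
  proof -
    have "eventually (\<lambda>t. content_list ss \<subseteq> D t) sequentially"
      using evF[of "content_list ss"] stab_ss unfolding stab_def by simp
    then show ?thesis
    proof eventually_elim
      case (elim t)
      then have "seqok (d t) cs" using seqok_iff[OF fD, of t ss] cs_ss unfolding d_def by simp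
      then show ?case using noreject unfolding cand_def by simp
    qed
  qed
  have ev_small: "eventually (\<lambda>t. \<not> cand H (d t) t c) sequentially" if cc: "c < cs" for c
  proof (cases "content_list (sq c) \<subseteq> L")
    case False
    have "\<not> cand H (d t) t c" for t
    proof
      assume "cand H (d t) t c"
      then have "seqok (d t) (seq_code (sq c))" unfolding cand_def by simp
      then have "content_list (sq c) \<subseteq> D t" using seqok_iff[OF fD] unfolding d_def by blast
      then show False using False DL by blast
    qed
    then show ?thesis by simp
  next
    case True
    then obtain u where u: "content_list u \<subseteq> L" "g (sq c @ u) \<noteq> g (sq c)"
      using notstab[OF cc] unfolding stab_def by blast
    obtain a1 where a1: "h c = Some a1" using hdef[OF True] by auto
    obtain a2 where a2: "h (seq_code (sq c @ u)) = Some a2" using hdef[of "sq c @ u"] True u(1) by auto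
    have ne: "a1 \<noteq> a2" using u(2) a1 a2 unfolding g_def by auto
    let ?e = "seq_code u"
    have app: "app_c c ?e = seq_code (sq c @ u)" using app_c_seq[of "sq c" u] by simp
    have e1: "eventually (\<lambda>t. ?e < Suc t) sequentially"
      using eventually_ge_at_top[of ?e] by eventually_elim simp
    have e2: "eventually (\<lambda>t. content_list u \<subseteq> D t) sequentially" using evF[OF _ u(1)] by simp
    have e3: "eventually (\<lambda>t. H t c = Suc a1) sequentially" using Hc2[OF a1] .
    have e4: "eventually (\<lambda>t. H t (app_c c ?e) = Suc a2) sequentially" using Hc2[OF a2] app by simp
    from e1 e2 e3 e4 show ?thesis
    proof eventually_elim
      case (elim t)
      have "seqok (d t) ?e" using elim(2) seqok_iff[OF fD] unfolding d_def by blast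
      then have "reject H (d t) t c" unfolding reject_def using elim ne by auto
      then show ?case unfolding cand_def by simp
    qed
  qed
  have ev_all: "eventually (\<lambda>t. \<forall>c\<in>{..<cs}. \<not> cand H (d t) t c) sequentially"
    by (rule eventually_ball_finite) (use ev_small in auto)
  have ev_lt: "eventually (\<lambda>t. cs < Suc t) sequentially"
    using eventually_ge_at_top[of cs] by eventually_elim simp
  have ev_r: "eventually (\<lambda>t. rfun H (pe (d t) t) = cs) sequentially"
    using ev_all ev_cs ev_lt
  proof eventually_elim
    case (elim t)
    have "(LEAST c. cand H (d t) t c) = cs"
      by (rule Least_equality) (use elim in \<open>auto simp: not_less[symmetric]\<close>)
    then have "bsearch (cand H (d t) t) (Suc t) = cs" using elim by (auto simp: bsearch_eq)
    then show ?case using elim(3) unfolding rfun_def by simp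
  qed
  then obtain n0 where n0: "\<forall>t\<ge>n0. rfun H (pe (d t) t) = cs" unfolding eventually_sequentially by blast
  show ?thesis unfolding Ex_def
  proof (intro exI[of _ n0] allI impI conjI)
    fix n assume "n0 \<le> n"
    then show "the (h (rfun H (prod_encode (set_code (content_list (initseg T n)), n)))) =
               the (h (rfun H (prod_encode (set_code (content_list (initseg T n0)), n0))))"
      using n0 by (simp add: set_code_eq d_def D_def)
  next
    show "W \<phi> (the (h (rfun H (prod_encode (set_code (content_list (initseg T n0)), n0))))) = content T"
      using n0 ha Wa cT by (simp add: set_code_eq d_def D_def)
  qed
qed

end


lemma dir12:
  assumes I: "R_monoid I" and hI: "h \<in> I"
    and lr: "\<forall>L\<in>\<L>. learns_CautEx \<phi> Gbeta h L" and df: "defined_on_Txt Gbeta h S"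
  shows "\<exists>h\<in>I. (\<forall>L\<in>\<L>. learns_CautEx \<phi> Psd h L) \<and> defined_on_Txt Psd h S"
proof -
  have "pcomp h" using I hI unfolding R_monoid_def by blast
  then obtain f where f: "partrec 1 f" "\<forall>x. h x = f [x]" unfolding pcomp_def by blast
  obtain C where C: "clocks 1 f C" using partrec_clocks[OF f(1)] by blast
  define H where "H s y = C (pe s (cons_c y 0))" for s y
  have le1: "cons_c y 0 = list_encode [y]" for y by (simp add: cons_c_def)
  have Hs: "\<forall>s y v. H s y = Suc v \<longrightarrow> h y = Some v"
  proof (intro allI impI)
    fix s y v assume "H s y = Suc v"
    then show "h y = Some v" using clocks_sound[OF C, of "[y]" s v] f(2) unfolding H_def le1 by simp
  qed
  have Hc: "\<forall>y v. h y = Some v \<longrightarrow> eventually (\<lambda>s. H s y = Suc v) sequentially"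
  proof (intro allI impI)
    fix y v assume "h y = Some v"
    then show "eventually (\<lambda>s. H s y = Suc v) sequentially"
      using clocks_complete[OF C, of "[y]" v] f(2) unfolding H_def le1 by simp
  qed
  have rC: "rc C" using C unfolding clocks_def by blast
  have rH: "rc (\<lambda>x. H (a x) (b x))" if "rc a" "rc b" for a b
    unfolding H_def by (intro rc_comp[OF rC] rc_pe rc_cons_c that rc_const)
  let ?h = "h \<circ>\<^sub>m (\<lambda>x. Some (rfun H x))"
  have Psd_eq: "Psd ?h T i = h (rfun H (prod_encode (set_code (content_list (initseg T i)), i)))" for T i
    by (simp add: Psd_def map_comp_def)
  show ?thesis
  proof (intro bexI conjI)
    have "(\<lambda>x. Some (rfun H x)) \<in> I" using rc_pcomp[OF rc_rfun[OF rH]] I unfolding R_monoid_def by auto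
    then show "?h \<in> I" using I hI unfolding R_monoid_def by auto
  next
    show "\<forall>L\<in>\<L>. learns_CautEx \<phi> Psd ?h L"
    proof
      fix L assume "L \<in> \<L>"
      then have lrn: "learns_CautEx \<phi> Gbeta h L" using lr by blast
      have tot: "\<forall>T'. content T' = L \<longrightarrow> (\<forall>i. Gbeta h T' i \<noteq> None)"
        using lrn unfolding learns_CautEx_def by blast
      show "learns_CautEx \<phi> Psd ?h L"
        unfolding learns_CautEx_def Psd_eq
        using tot_part[where h=h and H=H, OF Hs Hc tot] Caut_part[where h=h and H=H, OF Hs Hc lrn] Ex_part[where h=h and H=H, OF Hs Hc lrn] by blast
    qed
  next
    show "defined_on_Txt Psd ?h S"
      unfolding defined_on_Txt_def Psd_eq
    proof (intro allI impI)
      fix T i assume "content T \<in> S"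
      have tot: "\<forall>T'. content T' = content T \<longrightarrow> (\<forall>i. Gbeta h T' i \<noteq> None)"
        using df \<open>content T \<in> S\<close> unfolding defined_on_Txt_def by metis
      show "h (rfun H (prod_encode (set_code (content_list (initseg T i)), i))) \<noteq> None"
        using tot_part[where h=h and H=H, OF Hs Hc tot refl] .
    qed
  qed
qed

theorem theorem6:
  fixes \<phi> :: "nat \<Rightarrow> nat \<Rightarrow> nat option"
    and I :: "(nat \<Rightarrow> nat option) set"
    and S :: "nat set set"
    and \<L> :: "nat set set"
  assumes "acceptable \<phi>"
    and "R_monoid I"
    and "\<forall>A\<in>S. \<forall>B. B \<subseteq> A \<longrightarrow> B \<in> S"
  shows "(\<exists>h\<in>I. (\<forall>L\<in>\<L>. learns_CautEx \<phi> Gbeta h L) \<and> defined_on_Txt Gbeta h S)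
     \<longleftrightarrow> (\<exists>h\<in>I. (\<forall>L\<in>\<L>. learns_CautEx \<phi> Psd h L) \<and> defined_on_Txt Psd h S)"
  using dir12[OF assms(2)] dir21[OF assms(2)] by blast


end
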